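(* Let $\triangle PQR$ be a (closed, filled) triangle in $D$ with $\delta(P,Q,R)=\frac{1}{2}\Delta_1'(P,Q)$. Then $\rho(\psi_{\triangle PQR})=\frac{2}{5}$.
   Context: $D$ is the open unit disk in $\mathbb R^2$, $S^1$ its boundary circle identified with $\mathbb R/\mathbb Z$ via the counterclockwise normalized angle. For a closed convex $U\subset D$ and $v\in S^1$, $\psi_U(v)$ is the point $w\in S^1\setminus\{v\}$ such that the line $vw$ meets $U$ and $U$ lies in the closed half-plane to the left of the directed line from $v$ to $w$; it is an orientation-preserving homeomorphism of $S^1$. For such $f$, $\rho(f)=\lim_{n\to\infty}(\overline f^n(x)-x)/n$ with $\overline f$ the lift to $\mathbb R$ satisfying $\overline f(0)\in[0,1)$. Regard $D$ as the Beltrami–Klein model (hyperbolic lines are chords). For distinct $P,Q\in D$ with chord endpoints $v_1,v_2\in S^1$, $d'(P,Q)=\tfrac12\left|\log\frac{|v_1Q||v_2P|}{|v_1P||v_2Q|}\right|$; $\Delta_n'(P,Q)=\log\frac{e^{n d'(P,Q)}+1}{e^{n d'(P,Q)}-1}$ for $n\in\mathbb Z_{>0}$; $\delta(P,Q,R)=\min\{d'(R,S): S \text{ on the chord through } P,Q\}$. *)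

theory Defs
  imports "HOL-Analysis.Analysis"
begin

text \<open>The plane is modelled by the complex numbers; the open unit disk is ball 0 1
and the unit circle is sphere 0 1, parametrised by the normalised angle via circ.\<close>

definition circ :: "real \<Rightarrow> complex" where
  "circ t = cis (2 * pi * t)"

definition Dsk :: "complex set" where
  "Dsk = ball 0 1"

definition line_thru :: "complex \<Rightarrow> complex \<Rightarrow> complex set" where
  "line_thru a b = {a + of_real t * (b - a) | t. True}"

text \<open>p lies in the closed half-plane to the left of the directed line from v to w.\<close>
definition left_of :: "complex \<Rightarrow> complex \<Rightarrow> complex \<Rightarrow> bool" where
  "left_of v w p \<longleftrightarrow> Im (cnj (w - v) * (p - v)) \<ge> 0"

definition psi :: "complex set \<Rightarrow> complex \<Rightarrow> complex" where
  "psi U v = (THE w. w \<in> sphere 0 1 \<and> w \<noteq> v \<and> (line_thru v w \<inter> U \<noteq> {})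
                      \<and> (\<forall>p\<in>U. left_of v w p))"

definition circle_lift :: "(complex \<Rightarrow> complex) \<Rightarrow> real \<Rightarrow> real" where
  "circle_lift f = (THE F. continuous_on UNIV F \<and> (\<forall>x. circ (F x) = f (circ x))
                           \<and> F 0 \<in> {0..<1})"

definition has_rotation_number :: "(complex \<Rightarrow> complex) \<Rightarrow> real \<Rightarrow> bool" where
  "has_rotation_number f r \<longleftrightarrow>
     (\<forall>x. (\<lambda>n. ((circle_lift f ^^ n) x - x) / real n) \<longlonglongrightarrow> r)"

text \<open>Endpoints of the chord through P, Q (their order is irrelevant for d').\<close>
definition chord_end1 :: "complex \<Rightarrow> complex \<Rightarrow> complex" where
  "chord_end1 P Q = (SOME v. v \<in> sphere 0 1 \<and> v \<in> line_thru P Q)"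

definition chord_end2 :: "complex \<Rightarrow> complex \<Rightarrow> complex" where
  "chord_end2 P Q = (SOME v. v \<in> sphere 0 1 \<and> v \<in> line_thru P Q \<and> v \<noteq> chord_end1 P Q)"

definition dK :: "complex \<Rightarrow> complex \<Rightarrow> real" where
  "dK P Q = (if P = Q then 0 else
     (let v1 = chord_end1 P Q; v2 = chord_end2 P Q in
      \<bar>ln ((cmod (Q - v1) * cmod (P - v2)) / (cmod (P - v1) * cmod (Q - v2)))\<bar> / 2))"

definition DeltaK :: "nat \<Rightarrow> complex \<Rightarrow> complex \<Rightarrow> real" where
  "DeltaK n P Q = ln ((exp (real n * dK P Q) + 1) / (exp (real n * dK P Q) - 1))"

definition deltaK :: "complex \<Rightarrow> complex \<Rightarrow> complex \<Rightarrow> real" where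
  "deltaK P Q R = Inf {dK R S | S. S \<in> line_thru P Q \<inter> Dsk}"

end

theory Submission
  imports Defs
begin

definition crs :: "complex \<Rightarrow> complex \<Rightarrow> real" where
  "crs u v = Re u * Im v - Im u * Re v"

lemma left_of_crs: "left_of v w p \<longleftrightarrow> crs (w - v) (p - v) \<ge> 0"
  unfolding left_of_def crs_def by (simp add: algebra_simps)

lemma crs_anti: "crs b a = - crs a b"
  unfolding crs_def by (simp add: algebra_simps)

lemma crs_scale_left: "crs (of_real t * a) b = t * crs a b"
  unfolding crs_def by (simp add: algebra_simps)

lemma crs_scale_right: "crs a (of_real t * b) = t * crs a b"
  unfolding crs_def by (simp add: algebra_simps)

lemma crs_self: "crs a a = 0"
  unfolding crs_def by (simp add: algebra_simps)

lemma crs_add_right: "crs a (b + c) = crs a b + crs a c"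
  unfolding crs_def by (simp add: algebra_simps)

lemma crs_diff_right: "crs a (b - c) = crs a b - crs a c"
  unfolding crs_def by (simp add: algebra_simps)

lemma cmod_sq: "(cmod z)^2 = (Re z)^2 + (Im z)^2"
  by (simp add: cmod_power2)

lemma crs_zero_parallel:
  assumes "crs a b = 0" "a \<noteq> 0"
  shows "b = of_real ((Re a * Re b + Im a * Im b) / (cmod a)^2) * a"
proof -
  have n2: "(Re a)^2 + (Im a)^2 \<noteq> 0" using assms(2) by (simp add: complex_eq_iff)
  have c: "Re a * Im b = Im a * Re b" using assms(1) unfolding crs_def by simp
  have e1: "Re b * ((Re a)^2 + (Im a)^2) = (Re a * Re b + Im a * Im b) * Re a"
    using c by (simp add: power2_eq_square algebra_simps)
  have e2: "Im b * ((Re a)^2 + (Im a)^2) = (Re a * Re b + Im a * Im b) * Im a"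
    using c by (simp add: power2_eq_square algebra_simps)
  have "Re b = (Re a * Re b + Im a * Im b) / ((Re a)^2 + (Im a)^2) * Re a"
    using e1 n2 by (simp add: field_simps)
  moreover have "Im b = (Re a * Re b + Im a * Im b) / ((Re a)^2 + (Im a)^2) * Im a"
    using e2 n2 by (simp add: field_simps)
  ultimately show ?thesis by (simp add: complex_eq_iff cmod_sq)
qed

definition sec :: "complex \<Rightarrow> complex \<Rightarrow> complex" where
  "sec u c = u + of_real (2 * (1 - Re (cnj u * c)) / (cmod (c - u))^2) * (c - u)"

lemma cmod_add_sq: "(cmod (x + y))^2 = (cmod x)^2 + 2 * Re (cnj x * y) + (cmod y)^2"
  by (simp only: cmod_sq) (simp add: power2_eq_square algebra_simps)

lemma cmod_scale_sq: "(cmod (of_real m * d))^2 = m^2 * (cmod d)^2"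
  by (simp add: norm_mult power_mult_distrib)

lemma re_cnj_scale: "Re (cnj x * (of_real m * d)) = m * Re (cnj x * d)"
  by (simp add: algebra_simps)

lemma cmod_line_sq: "(cmod (u + of_real m * d))^2 = (cmod u)^2 + 2 * m * Re (cnj u * d) + m^2 * (cmod d)^2"
proof -
  have "(cmod (u + of_real m * d))^2 = (cmod u)^2 + 2 * Re (cnj u * (of_real m * d)) + (cmod (of_real m * d))^2"
    by (rule cmod_add_sq)
  also have "\<dots> = (cmod u)^2 + 2 * m * Re (cnj u * d) + m^2 * (cmod d)^2"
    by (simp only: cmod_scale_sq re_cnj_scale mult.assoc)
  finally show ?thesis .
qed

lemma line_sphere_param:
  assumes "cmod u = 1" "d \<noteq> 0" "cmod (u + of_real m * d) = 1"
  shows "m = 0 \<or> m = - 2 * Re (cnj u * d) / (cmod d)^2"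
proof -
  define D where "D = (cmod d)^2"
  define R where "R = Re (cnj u * d)"
  have "1 = 1 + 2 * m * R + m^2 * D" using cmod_line_sq[of u m d] assms(1,3) unfolding D_def R_def by simp
  hence e: "m * (2 * R + m * D) = 0" by (simp add: algebra_simps power2_eq_square)
  have n: "D \<noteq> 0" using assms(2) unfolding D_def by simp
  show ?thesis
  proof (cases "m = 0")
    case False
    hence "2 * R + m * D = 0" using e by simp
    hence "m * D = - 2 * R" by simp
    hence "m = - 2 * R / D" using n by (simp add: field_simps)
    thus ?thesis unfolding D_def R_def by simp
  qed simp
qed

lemma chord_inside:
  assumes "cmod v = 1" "cmod w = 1" "v \<noteq> w" "cmod (v + of_real s * (w - v)) < 1"
  shows "0 < s \<and> s < 1"
proof -
  define D where "D = (cmod (w - v))^2"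
  define R where "R = Re (cnj v * (w - v))"
  have e1: "(cmod (v + of_real s * (w - v)))^2 = 1 + 2 * s * R + s^2 * D"
    using cmod_line_sq[of v s "w - v"] assms(1) unfolding D_def R_def by simp
  have "(cmod (v + of_real 1 * (w - v)))^2 = 1 + 2 * 1 * R + 1^2 * D"
    using cmod_line_sq[of v 1 "w - v"] assms(1) unfolding D_def R_def by simp
  hence e2: "2 * R = - D" using assms(2) by simp
  have "(cmod (v + of_real s * (w - v)))^2 < 1" using assms(4)
    by (simp add: power_less_one_iff)
  hence "1 + 2 * s * R + s^2 * D < 1" using e1 by simp
  moreover have e3: "2 * s * R = - (s * D)"
  proof -
    have "2 * s * R = s * (2 * R)" by simp
    also have "\<dots> = s * (- D)" using e2 by simp
    finally show ?thesis by simp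
  qed
  ultimately have "s^2 * D - s * D < 0" by simp
  moreover have "s * (s - 1) * D = s^2 * D - s * D" by (simp add: algebra_simps power2_eq_square)
  ultimately have "s * (s - 1) * D < 0" by simp
  moreover have "D > 0" using assms(3) unfolding D_def by simp
  ultimately have "s * (s - 1) < 0" by (simp add: mult_less_0_iff)
  thus ?thesis by (auto simp: mult_less_0_iff)
qed

lemma re_cnj_self: "Re (cnj u * u) = (cmod u)^2"
  by (simp only: cmod_sq) (simp add: power2_eq_square)

lemma re_cnj_diff: "cmod u = 1 \<Longrightarrow> Re (cnj u * (c - u)) = Re (cnj u * c) - 1"
  using re_cnj_self[of u] by (simp add: right_diff_distrib)

lemma sec_param_pos:
  assumes "cmod u = 1" "cmod c < 1"
  shows "2 * (1 - Re (cnj u * c)) / (cmod (c - u))^2 > 0"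
proof -
  have "Re (cnj u * c) \<le> cmod (cnj u * c)" by (rule complex_Re_le_cmod)
  also have "\<dots> = cmod c" using assms(1) by (simp add: norm_mult)
  finally have "Re (cnj u * c) < 1" using assms(2) by simp
  moreover have "c \<noteq> u" using assms by auto
  ultimately show ?thesis by simp
qed

lemma sec_sphere:
  assumes "cmod u = 1" "c \<noteq> u"
  shows "cmod (sec u c) = 1"
proof -
  define D where "D = (cmod (c - u))^2"
  define R where "R = Re (cnj u * (c - u))"
  define m where "m = 2 * (1 - Re (cnj u * c)) / (cmod (c - u))^2"
  have D: "D > 0" using assms(2) unfolding D_def by simp
  have m: "m = - 2 * R / D" unfolding m_def R_def D_def using re_cnj_diff[OF assms(1)] by simp
  have "(cmod (sec u c))^2 = 1 + 2 * m * R + m^2 * D"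
    unfolding sec_def m_def[symmetric] using cmod_line_sq[of u m "c - u"] assms(1) unfolding D_def R_def by simp
  also have "\<dots> = 1" unfolding m using D by (simp add: field_simps power2_eq_square)
  finally have "(cmod (sec u c))^2 = 1" .
  thus ?thesis using norm_ge_zero[of "sec u c"] by (auto simp: power2_eq_1_iff)
qed

lemma sec_neq:
  assumes "cmod u = 1" "cmod c < 1"
  shows "sec u c \<noteq> u"
proof -
  have cu: "c - u \<noteq> 0" using assms by auto
  define m where "m = 2 * (1 - Re (cnj u * c)) / (cmod (c - u))^2"
  have "m > 0" unfolding m_def by (rule sec_param_pos[OF assms])
  hence m: "m \<noteq> 0" by simp
  have "sec u c - u = of_real m * (c - u)" unfolding sec_def m_def by simp
  also have "\<dots> \<noteq> 0" using m cu by simp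
  finally show ?thesis by simp
qed

lemma sec_unique:
  assumes "cmod u = 1" "cmod c < 1" "cmod w = 1" "w \<noteq> u" "crs (w - u) (c - u) = 0"
  shows "w = sec u c"
proof -
  have cu: "c - u \<noteq> 0" using assms by auto
  have z: "crs (c - u) (w - u) = 0" using assms(5) crs_anti[of "w-u" "c-u"] by simp
  define lam where "lam = (Re (c-u) * Re (w-u) + Im (c-u) * Im (w-u)) / (cmod (c-u))^2"
  have "w - u = of_real lam * (c - u)" unfolding lam_def by (rule crs_zero_parallel[OF z cu])
  hence wl: "w = u + of_real lam * (c - u)" by (metis add.commute diff_add_cancel)
  have "lam \<noteq> 0" using wl assms(4) by auto
  hence "lam = - 2 * Re (cnj u * (c - u)) / (cmod (c - u))^2"
    using line_sphere_param[OF assms(1) cu, of lam] wl assms(3) by auto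
  also have "\<dots> = 2 * (1 - Re (cnj u * c)) / (cmod (c - u))^2"
    using re_cnj_diff[OF assms(1), of c] by simp
  finally have l: "2 * (1 - Re (cnj u * c)) / (cmod (c - u))^2 = lam" by simp
  show ?thesis unfolding sec_def l wl ..
qed

lemma crs_rot: "crs (a * x) (a * y) = ((Re a)^2 + (Im a)^2) * crs x y"
  unfolding crs_def by (simp add: algebra_simps power2_eq_square)

lemma diff_eq_to: "a - b = d \<Longrightarrow> a = b + (d::complex)"
  by (simp add: algebra_simps)

lemma line_thru_mem: "c = v + of_real t * (w - v) \<Longrightarrow> c \<in> line_thru v w"
  unfolding line_thru_def by blast

lemma halfplane_convex: "convex {p. crs a (p - v) \<ge> 0}"
proof (rule convexI)
  fix x y and u w :: real
  assume x: "x \<in> {p. crs a (p - v) \<ge> 0}" and y: "y \<in> {p. crs a (p - v) \<ge> 0}"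
    and u: "0 \<le> u" and w: "0 \<le> w" and uw: "u + w = 1"
  have wu: "w = 1 - u" using uw by simp
  have "crs a (u *\<^sub>R x + w *\<^sub>R y - v) = u * crs a (x - v) + w * crs a (y - v)"
    unfolding crs_def wu by (simp add: algebra_simps)
  moreover have "u * crs a (x - v) \<ge> 0" using x u by simp
  moreover have "w * crs a (y - v) \<ge> 0" using y w by simp
  ultimately show "u *\<^sub>R x + w *\<^sub>R y \<in> {p. crs a (p - v) \<ge> 0}" by simp
qed

lemma hull_halfplane:
  assumes "\<forall>x\<in>V. crs a (x - v) \<ge> 0" "p \<in> convex hull V"
  shows "crs a (p - v) \<ge> 0"
proof -
  have "convex hull V \<subseteq> {p. crs a (p - v) \<ge> 0}"
    by (rule hull_minimal) (use assms(1) halfplane_convex in auto)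
  thus ?thesis using assms(2) by auto
qed

lemma hull_ball:
  assumes "V \<subseteq> ball 0 1" "p \<in> convex hull V"
  shows "cmod p < 1"
proof -
  have "convex hull V \<subseteq> ball 0 1" by (rule hull_minimal) (use assms(1) convex_ball in auto)
  thus ?thesis using assms(2) by auto
qed

lemma psi_eq:
  assumes V: "{P,Q,R} \<subseteq> ball (0::complex) 1"
    and v: "cmod v = 1" and w: "cmod w = 1" "w \<noteq> v"
    and c: "c \<in> {P,Q,R}" "crs (w - v) (c - v) = 0"
    and all: "\<forall>x\<in>{P,Q,R}. crs (w - v) (x - v) \<ge> 0"
  shows "psi (convex hull {P,Q,R}) v = w"
  unfolding psi_def
proof (rule the_equality)
  let ?T = "convex hull {P,Q,R}"
  have wv: "w - v \<noteq> 0" using w by simp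
  have cT: "c \<in> ?T" by (rule hull_inc[OF c(1)])
  have "c \<in> ball 0 1" by (rule subsetD[OF V c(1)])
  hence cb: "cmod c < 1" by simp
  define t where "t = (Re (w - v) * Re (c - v) + Im (w - v) * Im (c - v)) / (cmod (w - v))^2"
  have "c - v = of_real t * (w - v)" unfolding t_def by (rule crs_zero_parallel[OF c(2) wv])
  hence ct: "c = v + of_real t * (w - v)" by (rule diff_eq_to)
  have "c \<in> line_thru v w" by (rule line_thru_mem[OF ct])
  hence ne: "line_thru v w \<inter> ?T \<noteq> {}" using cT by blast
  have vw: "v \<noteq> w" by (rule not_sym[OF w(2)])
  have cb': "cmod (v + of_real t * (w - v)) < 1" using cb unfolding ct .
  have t01: "0 < t \<and> t < 1" by (rule chord_inside[OF v w(1) vw cb'])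
  have ws: "w \<in> sphere 0 1" using w(1) by simp
  have lw: "\<forall>p\<in>?T. left_of v w p" unfolding left_of_crs using hull_halfplane[OF all] by blast
  show "w \<in> sphere 0 1 \<and> w \<noteq> v \<and> line_thru v w \<inter> ?T \<noteq> {} \<and> (\<forall>p\<in>?T. left_of v w p)"
    using ws w(2) ne lw by blast
  fix w'
  assume h: "w' \<in> sphere 0 1 \<and> w' \<noteq> v \<and> line_thru v w' \<inter> ?T \<noteq> {} \<and> (\<forall>p\<in>?T. left_of v w' p)"
  have "w' \<in> sphere 0 1" using h by blast
  hence w'1: "cmod w' = 1" by simp
  have w'2: "w' \<noteq> v" using h by blast
  have vw': "v \<noteq> w'" by (rule not_sym[OF w'2])
  obtain p where p: "p \<in> line_thru v w'" "p \<in> ?T" using h by blast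
  obtain s where s: "p = v + of_real s * (w' - v)" using p(1) unfolding line_thru_def by blast
  have pb: "cmod p < 1" using hull_ball[OF V p(2)] .
  have pb': "cmod (v + of_real s * (w' - v)) < 1" using pb unfolding s .
  have s01: "0 < s \<and> s < 1" by (rule chord_inside[OF v w'1 vw' pb'])
  have c1: "crs (w' - v) (c - v) \<ge> 0" using h cT unfolding left_of_crs by blast
  have c2: "crs (w - v) (p - v) \<ge> 0" using hull_halfplane[OF all p(2)] .
  have pv: "p - v = of_real s * (w' - v)" using s by simp
  have "crs (w - v) (p - v) = s * crs (w - v) (w' - v)" unfolding pv by (rule crs_scale_right)
  hence g1: "crs (w - v) (w' - v) \<ge> 0" using c2 s01 by (simp add: zero_le_mult_iff)
  have cv: "c - v = of_real t * (w - v)" using ct by simp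
  have e3: "crs (w' - v) (c - v) = t * crs (w' - v) (w - v)" unfolding cv by (rule crs_scale_right)
  have e4: "crs (w' - v) (w - v) = - crs (w - v) (w' - v)" by (rule crs_anti)
  have "- t * crs (w - v) (w' - v) \<ge> 0" using c1 e3 e4 by simp
  hence g2: "crs (w - v) (w' - v) \<le> 0" using t01 by (simp add: mult_le_0_iff)
  have z: "crs (w - v) (w' - v) = 0" using g1 g2 by simp
  have "crs (w' - v) (c - v) = 0" using e3 e4 z by simp
  hence "w' = sec v c" by (rule sec_unique[OF v cb w'1 w'2])
  moreover have "w = sec v c" using sec_unique[OF v cb w(1) w(2) c(2)] .
  ultimately show "w' = w" by simp
qed

lemma sec_minus: "sec u c - u = of_real (2 * (1 - Re (cnj u * c)) / (cmod (c - u))^2) * (c - u)"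
  unfolding sec_def by simp

lemma psi_sec:
  assumes V: "{P,Q,R} \<subseteq> ball (0::complex) 1" and v: "cmod v = 1"
    and c: "c \<in> {P,Q,R}" and all: "\<forall>x\<in>{P,Q,R}. crs (c - v) (x - v) \<ge> 0"
  shows "psi (convex hull {P,Q,R}) v = sec v c"
proof -
  have cb: "cmod c < 1" using V c by auto
  define m where "m = 2 * (1 - Re (cnj v * c)) / (cmod (c - v))^2"
  have m: "m > 0" unfolding m_def by (rule sec_param_pos[OF v cb])
  have sm: "sec v c - v = of_real m * (c - v)" unfolding m_def by (rule sec_minus)
  show ?thesis
  proof (rule psi_eq[OF V v sec_sphere[OF v] sec_neq[OF v cb] c])
    show "c \<noteq> v" using v cb by auto
    show "crs (sec v c - v) (c - v) = 0" unfolding sm by (simp add: crs_scale_left crs_self)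
    show "\<forall>x\<in>{P, Q, R}. 0 \<le> crs (sec v c - v) (x - v)"
      unfolding sm using all m by (simp add: crs_scale_left)
  qed
qed

lemma crs_trans_aux:
  "(Re v * Re e + Im v * Im e) * crs a b + (Re v * Re a + Im v * Im a) * crs b e
   + (Re v * Re b + Im v * Im b) * crs e a = 0"
  unfolding crs_def by (simp add: algebra_simps)

lemma crs_trans:
  assumes "Re v * Re a + Im v * Im a < 0" "Re v * Re b + Im v * Im b < 0"
    "Re v * Re e + Im v * Im e < 0" "crs a b \<ge> 0" "crs b e \<ge> 0"
  shows "crs a e \<ge> 0"
proof -
  have "(Re v * Re e + Im v * Im e) * crs a b \<le> 0" using assms(3,4) by (simp add: mult_le_0_iff)
  moreover have "(Re v * Re a + Im v * Im a) * crs b e \<le> 0" using assms(1,5) by (simp add: mult_le_0_iff)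
  ultimately have "(Re v * Re b + Im v * Im b) * crs e a \<ge> 0" using crs_trans_aux[of v e a b] by linarith
  hence "crs e a \<le> 0" using assms(2) by (simp add: zero_le_mult_iff)
  thus ?thesis using crs_anti[of a e] by simp
qed

lemma dir_neg:
  assumes "cmod v = 1" "cmod x < 1"
  shows "Re v * Re (x - v) + Im v * Im (x - v) < 0"
proof -
  have "Re (cnj v * x) \<le> cmod (cnj v * x)" by (rule complex_Re_le_cmod)
  also have "\<dots> = cmod x" using assms(1) by (simp add: norm_mult)
  finally have "Re (cnj v * x) < 1" using assms(2) by simp
  moreover have "Re (cnj v * (x - v)) = Re (cnj v * x) - 1" by (rule re_cnj_diff[OF assms(1)])
  ultimately have "Re (cnj v * (x - v)) < 0" by simp
  thus ?thesis by simp
qed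

lemma exists_vertex:
  assumes V: "{P,Q,R} \<subseteq> ball (0::complex) 1" and v: "cmod v = 1"
  shows "\<exists>c\<in>{P,Q,R}. \<forall>x\<in>{P,Q,R}. crs (c - v) (x - v) \<ge> 0"
proof -
  have nP: "Re v * Re (P - v) + Im v * Im (P - v) < 0" using dir_neg[OF v] V by auto
  have nQ: "Re v * Re (Q - v) + Im v * Im (Q - v) < 0" using dir_neg[OF v] V by auto
  have nR: "Re v * Re (R - v) + Im v * Im (R - v) < 0" using dir_neg[OF v] V by auto
  note tr = crs_trans[of v]
  have aPQ: "crs (Q - v) (P - v) = - crs (P - v) (Q - v)" by (rule crs_anti)
  have aPR: "crs (R - v) (P - v) = - crs (P - v) (R - v)" by (rule crs_anti)
  have aQR: "crs (R - v) (Q - v) = - crs (Q - v) (R - v)" by (rule crs_anti)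
  have sP: "crs (P - v) (P - v) = 0" "crs (Q - v) (Q - v) = 0" "crs (R - v) (R - v) = 0"
    by (simp_all add: crs_self)
  show ?thesis
  proof (cases "crs (P - v) (Q - v) \<ge> 0 \<and> crs (P - v) (R - v) \<ge> 0")
    case True thus ?thesis using sP by auto
  next
    case F1: False
    show ?thesis
    proof (cases "crs (Q - v) (P - v) \<ge> 0 \<and> crs (Q - v) (R - v) \<ge> 0")
      case True thus ?thesis using sP by auto
    next
      case F2: False
      have "crs (R - v) (P - v) \<ge> 0 \<and> crs (R - v) (Q - v) \<ge> 0"
      proof (rule ccontr)
        assume F3: "\<not> ?thesis"
        show False
        proof (cases "crs (P - v) (Q - v) \<ge> 0")
          case True
          hence "crs (P - v) (R - v) < 0" using F1 by auto
          hence r1: "crs (R - v) (P - v) \<ge> 0" using aPR by simp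
          have "crs (R - v) (Q - v) \<ge> 0" using tr[OF nR nP nQ r1 True] .
          thus False using F3 r1 by simp
        next
          case False
          hence q1: "crs (Q - v) (P - v) \<ge> 0" using aPQ by simp
          hence "crs (Q - v) (R - v) < 0" using F2 by auto
          hence r2: "crs (R - v) (Q - v) \<ge> 0" using aQR by simp
          have "crs (R - v) (P - v) \<ge> 0" using tr[OF nR nQ nP r2 q1] .
          thus False using F3 r2 by simp
        qed
      qed
      thus ?thesis using sP by auto
    qed
  qed
qed

lemma closed_crs: "closed {v. 0 \<le> crs (c - v) (x - v)}"
  unfolding crs_def by (intro closed_Collect_le continuous_intros)

lemma sec_cont:
  assumes "cmod c < 1"
  shows "continuous_on (sphere 0 1) (\<lambda>v. sec v c)"
proof -
  have nz: "\<forall>v\<in>sphere 0 1. (cmod (c - v))^2 \<noteq> 0" using assms by auto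
  show ?thesis unfolding sec_def
    by (intro continuous_intros continuous_on_divide nz) 
qed

lemma psi_cont:
  assumes V: "{P,Q,R} \<subseteq> ball (0::complex) 1"
  shows "continuous_on (sphere 0 1) (psi (convex hull {P,Q,R}))"
proof -
  define S where "S c = sphere 0 1 \<inter> {v. 0 \<le> crs (c - v) (P - v)} \<inter> {v. 0 \<le> crs (c - v) (Q - v)}
     \<inter> {v. 0 \<le> crs (c - v) (R - v)}" for c
  have cl: "closed (S c)" for c unfolding S_def
    by (intro closed_Int closed_sphere closed_crs)
  have co: "continuous_on (S c) (psi (convex hull {P,Q,R}))" if c: "c \<in> {P,Q,R}" for c
  proof -
    have cb: "cmod c < 1" using subsetD[OF V c] by simp
    have "continuous_on (S c) (\<lambda>v. sec v c)"
      by (rule continuous_on_subset[OF sec_cont[OF cb]]) (auto simp: S_def)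
    moreover have "\<forall>v\<in>S c. psi (convex hull {P,Q,R}) v = sec v c"
    proof
      fix v assume "v \<in> S c"
      hence v: "cmod v = 1" and all: "\<forall>x\<in>{P,Q,R}. crs (c - v) (x - v) \<ge> 0"
        unfolding S_def by auto
      show "psi (convex hull {P,Q,R}) v = sec v c" by (rule psi_sec[OF V v c all])
    qed
    ultimately show ?thesis using continuous_on_cong by force
  qed
  have un: "sphere 0 1 = S P \<union> S Q \<union> S R"
  proof
    show "sphere 0 1 \<subseteq> S P \<union> S Q \<union> S R"
    proof
      fix v :: complex assume "v \<in> sphere 0 1"
      hence v: "cmod v = 1" by simp
      obtain c where c: "c \<in> {P,Q,R}" "\<forall>x\<in>{P,Q,R}. crs (c - v) (x - v) \<ge> 0"
        using exists_vertex[OF V v] by blast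
      have "v \<in> S c" unfolding S_def using v c(2) by auto
      thus "v \<in> S P \<union> S Q \<union> S R" using c(1) by auto
    qed
    show "S P \<union> S Q \<union> S R \<subseteq> sphere 0 1" unfolding S_def by auto
  qed
  have "continuous_on (S P \<union> S Q \<union> S R) (psi (convex hull {P,Q,R}))"
    by (intro continuous_on_closed_Un cl co closed_Un) auto
  thus ?thesis using un by simp
qed

lemma sec_dir:
  assumes u: "cmod u = 1" and c: "cmod c < 1" and c': "cmod c' < 1" and z: "crs (c - u) (c' - u) = 0"
  shows "sec u c = sec u c'"
proof -
  define m where "m = 2 * (1 - Re (cnj u * c)) / (cmod (c - u))^2"
  have sm: "sec u c - u = of_real m * (c - u)" unfolding m_def by (rule sec_minus)
  have "crs (sec u c - u) (c' - u) = m * crs (c - u) (c' - u)" unfolding sm by (rule crs_scale_left)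
  hence "crs (sec u c - u) (c' - u) = 0" using z by simp
  moreover have cu: "c \<noteq> u" using u c by auto
  ultimately show ?thesis by (intro sec_unique[OF u c' sec_sphere[OF u cu] sec_neq[OF u c]])
qed

lemma sec_sec:
  assumes v: "cmod v = 1" and c: "cmod c < 1"
  shows "sec (sec v c) c = v"
proof -
  define m where "m = 2 * (1 - Re (cnj v * c)) / (cmod (c - v))^2"
  have sm: "sec v c - v = of_real m * (c - v)" unfolding m_def by (rule sec_minus)
  define w where "w = sec v c"
  have cv: "c \<noteq> v" using v c by auto
  have w1: "cmod w = 1" unfolding w_def by (rule sec_sphere[OF v cv])
  have wv: "w \<noteq> v" unfolding w_def by (rule sec_neq[OF v c])
  have vw: "v - w = - (of_real m * (c - v))" using sm unfolding w_def by (simp add: algebra_simps)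
  have cw: "c - w = of_real (1 - m) * (c - v)" using sm unfolding w_def by (simp add: algebra_simps)
  have "crs (v - w) (c - w) = - m * ((1 - m) * crs (c - v) (c - v))"
    unfolding vw cw by (simp add: crs_def algebra_simps)
  hence "crs (v - w) (c - w) = 0" by (simp add: crs_self)
  hence "v = sec w c" by (rule sec_unique[OF w1 c v not_sym[OF wv]])
  thus ?thesis unfolding w_def by simp
qed

lemma sec_param_gt1:
  assumes v: "cmod v = 1" and c: "cmod c < 1"
  shows "2 * (1 - Re (cnj v * c)) / (cmod (c - v))^2 > 1"
proof -
  define m where "m = 2 * (1 - Re (cnj v * c)) / (cmod (c - v))^2"
  have m0: "m > 0" unfolding m_def by (rule sec_param_pos[OF v c])
  have sm: "sec v c - v = of_real m * (c - v)" unfolding m_def by (rule sec_minus)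
  have cv: "c \<noteq> v" using v c by auto
  have "c = v + of_real (1 / m) * (sec v c - v)" unfolding sm using m0 by (simp add: algebra_simps)
  hence "cmod (v + of_real (1 / m) * (sec v c - v)) < 1" using c by simp
  hence "0 < 1 / m \<and> 1 / m < 1"
    by (rule chord_inside[OF v sec_sphere[OF v cv] not_sym[OF sec_neq[OF v c]]])
  thus ?thesis unfolding m_def[symmetric] using m0 by (simp add: field_simps)
qed

lemma right_side:
  assumes v: "cmod v = 1" and c: "cmod c < 1" and h: "crs (c - v) (x - v) \<ge> 0"
  shows "crs (c - sec v c) (x - sec v c) \<le> 0"
proof -
  define m where "m = 2 * (1 - Re (cnj v * c)) / (cmod (c - v))^2"
  have m1: "m > 1" unfolding m_def by (rule sec_param_gt1[OF v c])
  have sm: "sec v c - v = of_real m * (c - v)" unfolding m_def by (rule sec_minus)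
  have cw: "c - sec v c = of_real (1 - m) * (c - v)" using sm by (simp add: algebra_simps)
  have xw: "x - sec v c = (x - v) - of_real m * (c - v)" using sm by (simp add: algebra_simps)
  have "crs (c - sec v c) (x - sec v c) = (1 - m) * crs (c - v) (x - v)"
    unfolding cw xw by (simp add: crs_def algebra_simps)
  moreover have "(1 - m) * crs (c - v) (x - v) \<le> 0" using m1 h by (simp add: mult_le_0_iff)
  ultimately show ?thesis by simp
qed

lemma psi_inj:
  assumes V: "{P,Q,R} \<subseteq> ball (0::complex) 1"
  shows "inj_on (psi (convex hull {P,Q,R})) (sphere 0 1)"
proof (rule inj_onI)
  fix v v' :: complex
  assume "v \<in> sphere 0 1" "v' \<in> sphere 0 1" and eq: "psi (convex hull {P,Q,R}) v = psi (convex hull {P,Q,R}) v'"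
  hence v: "cmod v = 1" and v': "cmod v' = 1" by auto
  obtain c where c: "c \<in> {P,Q,R}" "\<forall>x\<in>{P,Q,R}. crs (c - v) (x - v) \<ge> 0"
    using exists_vertex[OF V v] by blast
  obtain c' where c': "c' \<in> {P,Q,R}" "\<forall>x\<in>{P,Q,R}. crs (c' - v') (x - v') \<ge> 0"
    using exists_vertex[OF V v'] by blast
  have cb: "cmod c < 1" using subsetD[OF V c(1)] by simp
  have cb': "cmod c' < 1" using subsetD[OF V c'(1)] by simp
  define w where "w = sec v c"
  have w: "w = sec v' c'" using eq psi_sec[OF V v c(1) c(2)] psi_sec[OF V v' c'(1) c'(2)]
    unfolding w_def by simp
  have cv: "c \<noteq> v" using v cb by auto
  have w1: "cmod w = 1" unfolding w_def by (rule sec_sphere[OF v cv])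
  have r1: "crs (c - w) (c' - w) \<le> 0" unfolding w_def by (rule right_side[OF v cb]) (use c c' in auto)
  have r2: "crs (c' - w) (c - w) \<le> 0" unfolding w by (rule right_side[OF v' cb']) (use c c' in auto)
  have z: "crs (c - w) (c' - w) = 0" using r1 r2 crs_anti[of "c - w" "c' - w"] by simp
  have "v = sec w c" unfolding w_def by (rule sec_sec[OF v cb, symmetric])
  also have "\<dots> = sec w c'" by (rule sec_dir[OF w1 cb cb' z])
  also have "\<dots> = v'" unfolding w by (rule sec_sec[OF v' cb'])
  finally show "v = v'" .
qed

definition ang :: "complex \<Rightarrow> complex \<Rightarrow> real" where
  "ang a b = Arg2pi (b / a) / (2 * pi)"

lemma circ_add_int: "k \<in> \<int> \<Longrightarrow> circ (x + k) = circ x"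
proof -
  assume k: "k \<in> \<int>"
  have "circ (x + k) = cis (2 * pi * x) * cis (2 * pi * k)"
    unfolding circ_def by (simp add: cis_mult distrib_left)
  also have "cis (2 * pi * k) = 1" using k by simp
  finally show ?thesis unfolding circ_def by simp
qed

lemma cis_eq_1_int:
  assumes "cis (2 * pi * x) = 1" shows "x \<in> \<int>"
proof -
  have "exp (\<i> * complex_of_real (2 * pi * x)) = 1" using assms by (simp add: cis_conv_exp)
  then obtain n :: int where "Im (\<i> * complex_of_real (2 * pi * x)) = of_int (2 * n) * pi"
    unfolding exp_eq_1 by blast
  hence "2 * pi * x = 2 * pi * of_int n" by simp
  hence "x = of_int n" by simp
  thus ?thesis by simp
qed

lemma circ_eq_int:
  assumes "circ x = circ y" shows "x - y \<in> \<int>"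
proof -
  have "cis (2 * pi * (x - y)) = cis (2 * pi * x) / cis (2 * pi * y)"
    by (simp add: cis_divide right_diff_distrib)
  also have "\<dots> = 1" using assms unfolding circ_def by simp
  finally show ?thesis by (rule cis_eq_1_int)
qed

lemma norm_circ [simp]: "cmod (circ x) = 1"
  unfolding circ_def by simp

lemma unit_arg: "cmod z = 1 \<Longrightarrow> cis (Arg2pi z) = z"
  using complex_norm_eq_1_exp[of z] by (simp add: cis_conv_exp)

lemma ang_range: "0 \<le> ang a b \<and> ang a b < 1"
  unfolding ang_def using Arg2pi[of "b / a"] by (simp add: field_simps)

lemma ang_eq:
  assumes "cmod a = 1" "cmod b = 1"
  shows "b = a * cis (2 * pi * ang a b)"
proof -
  have "cmod (b / a) = 1" using assms by (simp add: norm_divide)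
  hence "cis (Arg2pi (b / a)) = b / a" by (rule unit_arg)
  moreover have "2 * pi * ang a b = Arg2pi (b / a)" unfolding ang_def by simp
  moreover have "a \<noteq> 0" using assms by auto
  ultimately show ?thesis by simp
qed

lemma ang_pos:
  assumes "cmod a = 1" "cmod b = 1" "a \<noteq> b"
  shows "0 < ang a b"
proof -
  have "Arg2pi (b / a) \<noteq> 0"
  proof
    assume "Arg2pi (b / a) = 0"
    hence "cis (Arg2pi (b / a)) = 1" by simp
    moreover have "cmod (b / a) = 1" using assms by (simp add: norm_divide)
    ultimately have "b / a = 1" using unit_arg by metis
    moreover have "a \<noteq> 0" using assms by auto
    ultimately show False using assms(3) by simp
  qed
  hence "Arg2pi (b / a) > 0" using Arg2pi_ge_0[of "b / a"] by linarith
  thus ?thesis unfolding ang_def by simp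
qed

lemma circ_add: "circ (x + y) = circ x * cis (2 * pi * y)"
  unfolding circ_def by (simp add: cis_mult distrib_left)

lemma funpow_shift1:
  fixes F :: "real \<Rightarrow> real"
  assumes "\<forall>x. F (x + 1) = F x + 1"
  shows "(F ^^ n) (x + 1) = (F ^^ n) x + 1"
  by (induction n) (use assms in simp_all)

lemma funpow_shift_nat:
  fixes F :: "real \<Rightarrow> real"
  assumes "\<forall>x. F (x + 1) = F x + 1"
  shows "(F ^^ n) (x + real k) = (F ^^ n) x + real k"
proof (induction k)
  case 0 thus ?case by simp
next
  case (Suc k)
  have "(F ^^ n) (x + real (Suc k)) = (F ^^ n) ((x + real k) + 1)" by (simp add: algebra_simps)
  also have "\<dots> = (F ^^ n) (x + real k) + 1" by (rule funpow_shift1[OF assms])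
  finally show ?case using Suc by simp
qed

lemma funpow_shift_int:
  fixes F :: "real \<Rightarrow> real"
  assumes "\<forall>x. F (x + 1) = F x + 1"
  shows "(F ^^ n) (x + real_of_int k) = (F ^^ n) x + real_of_int k"
proof (cases "k \<ge> 0")
  case True
  then obtain m where "k = int m" by (metis nonneg_eq_int)
  thus ?thesis using funpow_shift_nat[OF assms, of n x m] by simp
next
  case False
  then obtain m where m: "k = - int m" by (metis nonpos_int_cases not_le order_less_imp_le)
  have "(F ^^ n) (x + real_of_int k) + real m = (F ^^ n) (x + real_of_int k + real m)"
    by (rule funpow_shift_nat[OF assms, symmetric])
  also have "x + real_of_int k + real m = x" using m by simp
  finally show ?thesis using m by simp
qed

lemma funpow_mono:
  fixes F :: "real \<Rightarrow> real"
  assumes "\<And>x y. x \<le> y \<Longrightarrow> F x \<le> F y"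
  shows "x \<le> y \<Longrightarrow> (F ^^ n) x \<le> (F ^^ n) y"
  by (induction n) (simp_all add: assms)

lemma rot_limit:
  fixes F :: "real \<Rightarrow> real"
  assumes mono: "\<And>x y. x \<le> y \<Longrightarrow> F x \<le> F y"
    and sh: "\<forall>x. F (x + 1) = F x + 1"
    and per: "(F ^^ 5) x0 = x0 + 2"
  shows "(\<lambda>n. ((F ^^ n) x - x) / real n) \<longlonglongrightarrow> 2 / 5"
proof -
  have p5: "(F ^^ (5 * m)) x0 = x0 + 2 * real m" for m
  proof (induction m)
    case 0 thus ?case by simp
  next
    case (Suc m)
    have e: "5 * Suc m = 5 + 5 * m" by simp
    have "(F ^^ (5 * Suc m)) x0 = (F ^^ 5) ((F ^^ (5 * m)) x0)"
      by (simp only: e funpow_add comp_apply)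
    also have "\<dots> = (F ^^ 5) (x0 + real (2 * m))" using Suc by simp
    also have "\<dots> = (F ^^ 5) x0 + real (2 * m)" by (rule funpow_shift_nat[OF sh])
    finally show ?case using per by simp
  qed
  define B where "B = (\<Sum>r<5. \<bar>(F ^^ r) x0 - x0 - 2 * real r / 5\<bar>)"
  have b0: "\<bar>(F ^^ n) x0 - x0 - 2 * real n / 5\<bar> \<le> B" for n
  proof -
    define m where "m = n div 5"
    define r where "r = n mod 5"
    have n: "n = r + 5 * m" unfolding m_def r_def by simp
    have r5: "r < 5" unfolding r_def by simp
    have "(F ^^ n) x0 = (F ^^ r) ((F ^^ (5 * m)) x0)" unfolding n by (simp add: funpow_add)
    also have "\<dots> = (F ^^ r) (x0 + real (2 * m))" using p5 by simp
    also have "\<dots> = (F ^^ r) x0 + real (2 * m)" by (rule funpow_shift_nat[OF sh])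
    finally have "(F ^^ n) x0 - x0 - 2 * real n / 5 = (F ^^ r) x0 - x0 - 2 * real r / 5"
      unfolding n by (simp add: algebra_simps)
    moreover have "\<bar>(F ^^ r) x0 - x0 - 2 * real r / 5\<bar> \<le> B"
      unfolding B_def by (rule member_le_sum) (use r5 in auto)
    ultimately show ?thesis by simp
  qed
  define k where "k = \<lfloor>x - x0\<rfloor>"
  have k1: "x0 + real_of_int k \<le> x" "x \<le> x0 + real_of_int k + 1"
    unfolding k_def by linarith+
  have b1: "\<bar>((F ^^ n) x - x) - 2 * real n / 5\<bar> \<le> B + 1" for n
  proof -
    have "(F ^^ n) (x0 + real_of_int k) \<le> (F ^^ n) x" by (rule funpow_mono[OF mono k1(1)])
    hence l: "(F ^^ n) x0 + real_of_int k \<le> (F ^^ n) x" using funpow_shift_int[OF sh, of n x0 k] by simp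
    have xk: "x \<le> (x0 + 1) + real_of_int k" using k1(2) by linarith
    have "(F ^^ n) x \<le> (F ^^ n) ((x0 + 1) + real_of_int k)"
      by (rule funpow_mono[OF mono xk])
    hence u: "(F ^^ n) x \<le> (F ^^ n) x0 + 1 + real_of_int k"
      using funpow_shift_int[OF sh, of n "x0 + 1" k] funpow_shift1[OF sh, of n x0] by simp
    show ?thesis using b0[of n] l u k1 by linarith
  qed
  let ?C = "B + 1"
  have lo: "(\<lambda>n. 2 / 5 - ?C / real n) \<longlonglongrightarrow> 2 / 5 - 0"
    by (intro tendsto_intros)
  have hi: "(\<lambda>n. 2 / 5 + ?C / real n) \<longlonglongrightarrow> 2 / 5 + 0"
    by (intro tendsto_intros)
  show ?thesis
  proof (rule tendsto_sandwich[OF _ _ lo[simplified] hi[simplified]])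
    show "\<forall>\<^sub>F n in sequentially. 2 / 5 - ?C / real n \<le> ((F ^^ n) x - x) / real n"
    proof (rule eventually_sequentiallyI[of 1])
      fix n :: nat assume n: "1 \<le> n"
      hence np: "real n > 0" by simp
      have "2 * real n / 5 - ?C \<le> (F ^^ n) x - x" using b1[of n] by linarith
      hence "(2 * real n / 5 - ?C) / real n \<le> ((F ^^ n) x - x) / real n"
        using np by (simp add: divide_right_mono)
      moreover have "(2 * real n / 5 - ?C) / real n = 2 / 5 - ?C / real n"
        using np by (simp add: field_simps)
      ultimately show "2 / 5 - ?C / real n \<le> ((F ^^ n) x - x) / real n" by simp
    qed
    show "\<forall>\<^sub>F n in sequentially. ((F ^^ n) x - x) / real n \<le> 2 / 5 + ?C / real n"
    proof (rule eventually_sequentiallyI[of 1])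
      fix n :: nat assume n: "1 \<le> n"
      hence np: "real n > 0" by simp
      have "(F ^^ n) x - x \<le> 2 * real n / 5 + ?C" using b1[of n] by linarith
      hence "((F ^^ n) x - x) / real n \<le> (2 * real n / 5 + ?C) / real n"
        using np by (simp add: divide_right_mono)
      moreover have "(2 * real n / 5 + ?C) / real n = 2 / 5 + ?C / real n"
        using np by (simp add: field_simps)
      ultimately show "((F ^^ n) x - x) / real n \<le> 2 / 5 + ?C / real n" by simp
    qed
  qed
qed

lemma sin_sum_id:
  fixes X Y :: real
  shows "sin (2 * (X + Y)) - sin (2 * X) - sin (2 * Y) = - 4 * sin X * sin Y * sin (X + Y)"
proof -
  have a: "sin (2 * (X + Y)) = 2 * sin (X + Y) * cos (X + Y)" by (rule sin_double)
  have b1: "sin (2 * X) = sin ((X + Y) + (X - Y))" by (simp add: algebra_simps)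
  have b2: "sin (2 * Y) = sin ((X + Y) - (X - Y))" by (simp add: algebra_simps)
  have b: "sin (2 * X) + sin (2 * Y) = 2 * sin (X + Y) * cos (X - Y)"
    unfolding b1 b2 sin_add sin_diff by (simp add: algebra_simps)
  have c: "cos (X + Y) - cos (X - Y) = - 2 * sin X * sin Y"
    unfolding cos_add cos_diff by (simp add: algebra_simps)
  have "sin (2 * (X + Y)) - sin (2 * X) - sin (2 * Y) = 2 * sin (X + Y) * (cos (X + Y) - cos (X - Y))"
    using a b by (simp add: algebra_simps)
  also have "\<dots> = - 4 * sin X * sin Y * sin (X + Y)" unfolding c by (simp add: algebra_simps)
  finally show ?thesis .
qed

lemma crs_cis: "crs (cis (2 * (X + Y)) - 1) (cis (2 * X) - 1) = - 4 * sin X * sin Y * sin (X + Y)"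
proof -
  have "crs (cis (2 * (X + Y)) - 1) (cis (2 * X) - 1)
      = (cos (2 * (X + Y)) - 1) * sin (2 * X) - sin (2 * (X + Y)) * (cos (2 * X) - 1)"
    unfolding crs_def by simp
  also have "\<dots> = (sin (2 * X) * cos (2 * (X + Y)) - cos (2 * X) * sin (2 * (X + Y))) - sin (2 * X) + sin (2 * (X + Y))"
    by (simp add: algebra_simps)
  also have "sin (2 * X) * cos (2 * (X + Y)) - cos (2 * X) * sin (2 * (X + Y)) = sin (2 * X - 2 * (X + Y))"
    by (rule sin_diff[symmetric])
  also have "2 * X - 2 * (X + Y) = - (2 * Y)" by (simp add: algebra_simps)
  finally have "crs (cis (2 * (X + Y)) - 1) (cis (2 * X) - 1) = sin (2 * (X + Y)) - sin (2 * X) - sin (2 * Y)"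
    by simp
  thus ?thesis using sin_sum_id by simp
qed

lemma arg_cis_range:
  assumes "0 \<le> a" "a < 2 * pi" shows "Arg2pi (cis a) = a"
  by (rule Arg2pi_unique[of 1]) (use assms in \<open>simp_all add: cis_conv_exp\<close>)

lemma arc_add:
  assumes a: "cmod a = 1" and b: "cmod b = 1" and c: "cmod c = 1"
    and ab: "a \<noteq> b" and bc: "b \<noteq> c" and ac: "a \<noteq> c"
  shows "crs (c - a) (b - a) < 0 \<Longrightarrow> ang a b + ang b c = ang a c"
    and "crs (c - a) (b - a) > 0 \<Longrightarrow> ang a b + ang b c = ang a c + 1"
proof -
  define s where "s = ang a b"
  define t where "t = ang b c"
  have s01: "0 < s" "s < 1" unfolding s_def using ang_pos[OF a b ab] ang_range[of a b] by auto
  have t01: "0 < t" "t < 1" unfolding t_def using ang_pos[OF b c bc] ang_range[of b c] by auto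
  have bs: "b = a * cis (2 * pi * s)" unfolding s_def by (rule ang_eq[OF a b])
  have ct: "c = b * cis (2 * pi * t)" unfolding t_def by (rule ang_eq[OF b c])
  have cst: "c = a * cis (2 * pi * (s + t))" unfolding ct bs by (simp add: cis_mult distrib_left mult.assoc)
  have a0: "a \<noteq> 0" using a by auto
  have a2: "(Re a)^2 + (Im a)^2 = 1" using a by (simp add: cmod_sq[symmetric])
  define X where "X = pi * s"
  define Y where "Y = pi * t"
  have "crs (c - a) (b - a) = crs (a * (cis (2 * (X + Y)) - 1)) (a * (cis (2 * X) - 1))"
    unfolding cst bs X_def Y_def by (simp add: algebra_simps)
  also have "\<dots> = crs (cis (2 * (X + Y)) - 1) (cis (2 * X) - 1)" unfolding crs_rot a2 by simp
  also have "\<dots> = - 4 * sin X * sin Y * sin (X + Y)" by (rule crs_cis)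
  finally have cr: "crs (c - a) (b - a) = - 4 * sin X * sin Y * sin (X + Y)" .
  have sX: "sin X > 0" unfolding X_def using s01 by (intro sin_gt_zero) auto
  have sY: "sin Y > 0" unfolding Y_def using t01 by (intro sin_gt_zero) auto
  have st1: "s + t \<noteq> 1"
  proof
    assume "s + t = 1"
    hence "c = a" unfolding cst by simp
    thus False using ac by simp
  qed
  have ca: "c / a = cis (2 * pi * (s + t))" unfolding cst using a0 by simp
  have XY: "X + Y = pi * (s + t)" unfolding X_def Y_def by (simp add: algebra_simps)
  have pst: "0 < pi * (s + t)" using s01 t01 by simp
  {
    assume lt: "s + t < 1"
    have "pi * (s + t) < pi * 1" using lt by (intro mult_strict_left_mono) auto
    hence "sin (X + Y) > 0" unfolding XY using pst by (intro sin_gt_zero) auto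
    moreover have "2 * pi * (s + t) < 2 * pi" using lt by simp
    hence "ang a c = s + t" unfolding ang_def ca
      using arg_cis_range[of "2 * pi * (s + t)"] pst by simp
    ultimately have "crs (c - a) (b - a) < 0" "ang a b + ang b c = ang a c"
      using cr sX sY unfolding s_def[symmetric] t_def[symmetric] by (auto simp: mult_pos_pos)
  } note L = this
  {
    assume gt: "s + t > 1"
    have "pi * (s + t - 1) > 0" using gt by simp
    moreover have "pi * (s + t - 1) < pi * 1" using s01 t01 by (intro mult_strict_left_mono) auto
    ultimately have "sin (pi * (s + t - 1)) > 0" by (intro sin_gt_zero) auto
    moreover have "pi * (s + t - 1) = X + Y - pi" unfolding XY by (simp add: algebra_simps)
    ultimately have "sin (X + Y - pi) > 0" by simp
    hence "sin (X + Y) < 0" by (simp add: sin_diff)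
    hence cpos: "crs (c - a) (b - a) > 0" using cr sX sY by (simp add: mult_pos_neg)
    have e2: "2 * pi * (s + t) = 2 * pi * (s + t - 1) + 2 * pi" by (simp add: algebra_simps)
    have "cis (2 * pi * (s + t)) = cis (2 * pi * (s + t - 1))"
      unfolding e2 cis_mult[symmetric] by simp
    moreover have "Arg2pi (cis (2 * pi * (s + t - 1))) = 2 * pi * (s + t - 1)"
      using arg_cis_range[of "2 * pi * (s + t - 1)"] s01 t01 gt by simp
    ultimately have "ang a c = s + t - 1" unfolding ang_def ca by simp
    hence "ang a b + ang b c = ang a c + 1" unfolding s_def[symmetric] t_def[symmetric] by simp
    note cpos this
  } note G = this
  show "crs (c - a) (b - a) < 0 \<Longrightarrow> ang a b + ang b c = ang a c"
    using L G st1 by (cases "s + t < 1") auto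
  show "crs (c - a) (b - a) > 0 \<Longrightarrow> ang a b + ang b c = ang a c + 1"
    using L G st1 by (cases "s + t < 1") auto
qed

lemma circ_cont: "continuous_on UNIV circ"
  unfolding circ_def by (intro continuous_intros)

lemma lift_facts:
  fixes f :: "complex \<Rightarrow> complex"
  assumes cont: "continuous_on (sphere 0 1) f"
    and maps: "\<And>v. cmod v = 1 \<Longrightarrow> cmod (f v) = 1"
    and nf: "\<And>v. cmod v = 1 \<Longrightarrow> f v \<noteq> v"
    and inj: "inj_on f (sphere 0 1)"
    and F_def: "F = (\<lambda>x. x + ang (circ x) (f (circ x)))"
  shows "circle_lift f = F" and "\<forall>x. F (x + 1) = F x + 1"
    and "\<And>x y. x \<le> y \<Longrightarrow> F x \<le> F y"
    and "\<And>x. circ (F x) = f (circ x)"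
proof -
  define h where "h x = f (circ x) / circ x" for x
  have h1: "cmod (h x) = 1" for x unfolding h_def using maps[of "circ x"] by (simp add: norm_divide)
  have hne: "h x \<noteq> 1" for x
  proof
    assume "h x = 1"
    hence "f (circ x) = circ x" unfolding h_def using norm_circ[of x]
      by (metis divide_eq_1_iff)
    thus False using nf[of "circ x"] by simp
  qed
  have hnn: "h x \<notin> \<real>\<^sub>\<ge>\<^sub>0" for x
  proof
    assume "h x \<in> \<real>\<^sub>\<ge>\<^sub>0"
    then obtain r where r: "r \<ge> 0" "h x = of_real r" by (auto simp: nonneg_Reals_def)
    hence "\<bar>r\<bar> = 1" using h1[of x] by simp
    hence "h x = 1" using r by simp
    thus False using hne by simp
  qed
  have hc: "continuous_on UNIV h"
  proof -
    have "continuous_on UNIV (\<lambda>x. f (circ x))"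
      by (rule continuous_on_compose2[OF cont circ_cont]) auto
    moreover have "\<forall>x\<in>UNIV. circ x \<noteq> 0" using norm_circ by (metis norm_zero zero_neq_one)
    ultimately show ?thesis unfolding h_def by (intro continuous_on_divide circ_cont)
  qed
  have Ac: "continuous_on (- \<real>\<^sub>\<ge>\<^sub>0) Arg2pi"
    by (intro continuous_at_imp_continuous_on ballI continuous_at_Arg2pi) auto
  have Gc: "continuous_on UNIV (\<lambda>x. Arg2pi (h x))"
    by (rule continuous_on_compose2[OF Ac hc]) (use hnn in auto)
  have Gdef: "ang (circ x) (f (circ x)) = Arg2pi (h x) / (2 * pi)" for x
    unfolding ang_def h_def by simp
  have Fc: "continuous_on UNIV F"
    unfolding F_def Gdef by (intro continuous_intros Gc) auto
  have Fl: "circ (F x) = f (circ x)" for x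
    unfolding F_def circ_add using ang_eq[OF norm_circ maps[OF norm_circ]] by simp
  have G01: "0 < ang (circ x) (f (circ x)) \<and> ang (circ x) (f (circ x)) < 1" for x
    using ang_pos[OF norm_circ maps[OF norm_circ] not_sym[OF nf[OF norm_circ]]] ang_range by auto
  have F0: "F 0 \<in> {0..<1}" unfolding F_def using G01[of 0] by auto
  show "circle_lift f = F" unfolding circle_lift_def
  proof (rule the_equality)
    show "continuous_on UNIV F \<and> (\<forall>x. circ (F x) = f (circ x)) \<and> F 0 \<in> {0..<1}"
      using Fc Fl F0 by blast
    fix F' assume h': "continuous_on UNIV F' \<and> (\<forall>x. circ (F' x) = f (circ x)) \<and> F' 0 \<in> {0..<1}"
    define D where "D x = F' x - F x" for x
    have Dc: "continuous_on UNIV D" unfolding D_def using h' Fc by (intro continuous_intros) auto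
    have Di: "D x \<in> \<int>" for x unfolding D_def by (rule circ_eq_int) (use h' Fl in auto)
    have "D constant_on UNIV"
    proof (rule continuous_discrete_range_constant[OF connected_UNIV Dc])
      fix x :: real assume "x \<in> UNIV"
      show "\<exists>e>0. \<forall>y. y \<in> UNIV \<and> D y \<noteq> D x \<longrightarrow> e \<le> norm (D y - D x)"
      proof (intro exI[of _ 1] conjI allI impI)
        fix y assume "y \<in> UNIV \<and> D y \<noteq> D x"
        hence "D y - D x \<in> \<int>" "D y - D x \<noteq> 0" using Di by auto
        thus "1 \<le> norm (D y - D x)" using Ints_nonzero_abs_ge1[of "D y - D x"] by simp
      qed simp
    qed
    then obtain k where k: "\<And>x. D x = k" unfolding constant_on_def by blast
    have "\<bar>D 0\<bar> < 1" unfolding D_def using h' F0 by auto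
    hence "D 0 = 0" using Di[of 0] Ints_nonzero_abs_ge1[of "D 0"] by (cases "D 0 = 0") auto
    hence "D x = 0" for x using k by metis
    thus "F' = F" unfolding D_def by (intro ext) simp
  qed
  have sh: "F (x + 1) = F x + 1" for x
  proof -
    have "circ (x + 1) = circ x" using circ_add_int[of 1 x] by simp
    thus ?thesis unfolding F_def by simp
  qed
  show "\<forall>x. F (x + 1) = F x + 1" using sh by blast
  have injF: "inj F"
  proof (rule injI)
    fix x y assume e: "F x = F y"
    hence "f (circ x) = f (circ y)" using Fl by metis
    hence cxy: "circ x = circ y" using inj unfolding inj_on_def by simp
    hence "ang (circ x) (f (circ x)) = ang (circ y) (f (circ y))" by simp
    hence "x = y" using e unfolding F_def by simp
    thus "x = y" .
  qed
  show "x \<le> y \<Longrightarrow> F x \<le> F y" for x y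
  proof -
    assume xy: "x \<le> y"
    show ?thesis
    proof (cases "x = y")
      case False
      hence lt: "x < y" using xy by simp
      have "F x < F y \<and> F y < F (y + 1) \<or> F (y + 1) < F y \<and> F y < F x"
        by (rule continuous_inj_imp_mono[OF lt _ continuous_on_subset[OF Fc] inj_on_subset[OF injF]]) auto
      thus ?thesis using sh[of y] by auto
    qed simp
  qed
  show "circ (F x) = f (circ x)" for x by (rule Fl)
qed

lemma crs_distinct:
  assumes "crs (c - a) (b - a) \<noteq> 0"
  shows "a \<noteq> b" "b \<noteq> c" "a \<noteq> c"
  using assms by (auto simp: crs_def)

lemma arcA:
  assumes "cmod a = 1" "cmod b = 1" "cmod c = 1" "crs (c - a) (b - a) < 0"
  shows "ang a b + ang b c = ang a c"
proof -
  have n: "crs (c - a) (b - a) \<noteq> 0" using assms(4) by simp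
  show ?thesis by (rule arc_add(1)[OF assms(1-3) crs_distinct[OF n] assms(4)])
qed

lemma rot_from_orbit:
  fixes f :: "complex \<Rightarrow> complex" and o0 o1 o2 o3 o4 :: complex
  assumes cont: "continuous_on (sphere 0 1) f"
    and maps: "\<And>v. cmod v = 1 \<Longrightarrow> cmod (f v) = 1"
    and nf: "\<And>v. cmod v = 1 \<Longrightarrow> f v \<noteq> v"
    and inj: "inj_on f (sphere 0 1)"
    and u: "cmod o0 = 1" "cmod o1 = 1" "cmod o2 = 1" "cmod o3 = 1" "cmod o4 = 1"
    and orb: "f o0 = o1" "f o1 = o2" "f o2 = o3" "f o3 = o4" "f o4 = o0"
    and A: "crs (o1 - o0) (o3 - o0) < 0" "crs (o2 - o1) (o4 - o1) < 0" "crs (o3 - o2) (o0 - o2) < 0"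
      "crs (o4 - o3) (o1 - o3) < 0" "crs (o0 - o4) (o2 - o4) < 0"
    and Bc: "crs (o1 - o0) (o2 - o0) > 0" "crs (o2 - o1) (o3 - o1) > 0" "crs (o3 - o2) (o4 - o2) > 0"
      "crs (o4 - o3) (o0 - o3) > 0" "crs (o0 - o4) (o1 - o4) > 0"
  shows "has_rotation_number f (2 / 5)"
proof -
  define F where "F = (\<lambda>x. x + ang (circ x) (f (circ x)))"
  note LF = lift_facts[OF cont maps nf inj F_def]
  have step: "circ x = q \<Longrightarrow> F x = x + ang q (f q) \<and> circ (F x) = f q" for x q
    using LF(4)[of x] unfolding F_def by simp
  define x0 where "x0 = Arg2pi o0 / (2 * pi)"
  have c0: "circ x0 = o0" unfolding x0_def circ_def using unit_arg[OF u(1)] by simp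
  define d0 where "d0 = ang o0 o1"
  define d1 where "d1 = ang o1 o2"
  define d2 where "d2 = ang o2 o3"
  define d3 where "d3 = ang o3 o4"
  define d4 where "d4 = ang o4 o0"
  have s1: "F x0 = x0 + d0" "circ (F x0) = o1" using step[OF c0] orb unfolding d0_def by auto
  have s2: "F (F x0) = F x0 + d1" "circ (F (F x0)) = o2" using step[OF s1(2)] orb unfolding d1_def by auto
  have s3: "F (F (F x0)) = F (F x0) + d2" "circ (F (F (F x0))) = o3" using step[OF s2(2)] orb unfolding d2_def by auto
  have s4: "F (F (F (F x0))) = F (F (F x0)) + d3" "circ (F (F (F (F x0)))) = o4"
    using step[OF s3(2)] orb unfolding d3_def by auto
  have s5: "F (F (F (F (F x0)))) = F (F (F (F x0))) + d4" using step[OF s4(2)] orb unfolding d4_def by auto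
  have f5: "(F ^^ 5) x0 = F (F (F (F (F x0))))" by (simp add: eval_nat_numeral)
  have per0: "(F ^^ 5) x0 = x0 + (d0 + d1 + d2 + d3 + d4)" using f5 s1 s2 s3 s4 s5 by simp
  define a0 where "a0 = ang o0 o3"
  define a1 where "a1 = ang o1 o4"
  define a2 where "a2 = ang o2 o0"
  define a3 where "a3 = ang o3 o1"
  define a4 where "a4 = ang o4 o2"
  have e0: "a0 + a3 = d0" unfolding a0_def a3_def d0_def by (rule arcA[OF u(1) u(4) u(2) A(1)])
  have e1: "a1 + a4 = d1" unfolding a1_def a4_def d1_def by (rule arcA[OF u(2) u(5) u(3) A(2)])
  have e2: "a2 + a0 = d2" unfolding a2_def a0_def d2_def by (rule arcA[OF u(3) u(1) u(4) A(3)])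
  have e3: "a3 + a1 = d3" unfolding a3_def a1_def d3_def by (rule arcA[OF u(4) u(2) u(5) A(4)])
  have e4: "a4 + a2 = d4" unfolding a4_def a2_def d4_def by (rule arcA[OF u(5) u(3) u(1) A(5)])
  have B': "crs (o2 - o0) (o1 - o0) < 0" "crs (o3 - o1) (o2 - o1) < 0" "crs (o4 - o2) (o3 - o2) < 0"
      "crs (o0 - o3) (o4 - o3) < 0" "crs (o1 - o4) (o0 - o4) < 0"
    using Bc crs_anti by (metis neg_less_0_iff_less)+
  have b0: "d0 + d1 < 1" unfolding d0_def d1_def using arcA[OF u(1) u(2) u(3) B'(1)] ang_range by metis
  have b1: "d1 + d2 < 1" unfolding d1_def d2_def using arcA[OF u(2) u(3) u(4) B'(2)] ang_range by metis
  have b2: "d2 + d3 < 1" unfolding d2_def d3_def using arcA[OF u(3) u(4) u(5) B'(3)] ang_range by metis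
  have b3: "d3 + d4 < 1" unfolding d3_def d4_def using arcA[OF u(4) u(5) u(1) B'(4)] ang_range by metis
  have b4: "d4 + d0 < 1" unfolding d4_def d0_def using arcA[OF u(5) u(1) u(2) B'(5)] ang_range by metis
  have n03: "o0 \<noteq> o3" "o3 \<noteq> o1" "o1 \<noteq> o4" "o4 \<noteq> o2" "o2 \<noteq> o0"
    using crs_distinct[of o1 o0 o3] crs_distinct[of o4 o3 o1] crs_distinct[of o2 o1 o4]
      crs_distinct[of o0 o4 o2] crs_distinct[of o3 o2 o0] A by auto
  have ap: "a0 > 0" "a1 > 0" "a2 > 0" "a3 > 0" "a4 > 0"
    unfolding a0_def a1_def a2_def a3_def a4_def using ang_pos u n03 by (metis not_sym)+
  have r0: "o3 = o0 * cis (2 * pi * a0)" unfolding a0_def by (rule ang_eq[OF u(1) u(4)])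
  have r3: "o1 = o3 * cis (2 * pi * a3)" unfolding a3_def by (rule ang_eq[OF u(4) u(2)])
  have r1: "o4 = o1 * cis (2 * pi * a1)" unfolding a1_def by (rule ang_eq[OF u(2) u(5)])
  have r4: "o2 = o4 * cis (2 * pi * a4)" unfolding a4_def by (rule ang_eq[OF u(5) u(3)])
  have r2: "o0 = o2 * cis (2 * pi * a2)" unfolding a2_def by (rule ang_eq[OF u(3) u(1)])
  define e where "e = a0 + a1 + a2 + a3 + a4"
  have "o0 = o0 * cis (2 * pi * e)"
  proof -
    have "o0 = o2 * cis (2 * pi * a2)" by (rule r2)
    hence "o0 = o4 * cis (2 * pi * a4) * cis (2 * pi * a2)" by (subst (asm) r4)
    hence "o0 = o1 * cis (2 * pi * a1) * cis (2 * pi * a4) * cis (2 * pi * a2)" by (subst (asm) r1)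
    hence "o0 = o3 * cis (2 * pi * a3) * cis (2 * pi * a1) * cis (2 * pi * a4) * cis (2 * pi * a2)" by (subst (asm) r3)
    hence "o0 = o0 * cis (2 * pi * a0) * cis (2 * pi * a3) * cis (2 * pi * a1) * cis (2 * pi * a4) * cis (2 * pi * a2)"
      by (subst (asm) r0)
    also have "\<dots> = o0 * cis (2 * pi * a0 + 2 * pi * a3 + 2 * pi * a1 + 2 * pi * a4 + 2 * pi * a2)"
      by (simp only: cis_mult mult.assoc)
    also have "2 * pi * a0 + 2 * pi * a3 + 2 * pi * a1 + 2 * pi * a4 + 2 * pi * a2 = 2 * pi * e"
      unfolding e_def by (simp add: algebra_simps)
    finally show ?thesis .
  qed
  moreover have "o0 \<noteq> 0" using u(1) by auto
  ultimately have "cis (2 * pi * e) = 1" by simp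
  hence eZ: "e \<in> \<int>" by (rule cis_eq_1_int)
  have "d0 + d1 + d2 + d3 + d4 = (a0 + a3) + (a1 + a4) + (a2 + a0) + (a3 + a1) + (a4 + a2)"
    using e0 e1 e2 e3 e4 by simp
  also have "\<dots> = 2 * e" unfolding e_def by simp
  finally have sumd: "d0 + d1 + d2 + d3 + d4 = 2 * e" .
  have epos: "e > 0" unfolding e_def using ap by linarith
  have elt: "4 * e < 5" using b0 b1 b2 b3 b4 sumd by linarith
  obtain n :: int where n: "e = of_int n" using eZ by (auto elim: Ints_cases)
  have "n = 1" using epos elt unfolding n by linarith
  hence "e = 1" using n by simp
  hence per: "(F ^^ 5) x0 = x0 + 2" using per0 sumd by simp
  have mono: "F x \<le> F y" if "x \<le> y" for x y using LF(3) that by blast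
  have sh: "\<forall>x. F (x + 1) = F x + 1" using LF(2) by blast
  have lim: "(\<lambda>n. ((F ^^ n) x - x) / real n) \<longlonglongrightarrow> 2 / 5" for x
    by (rule rot_limit[OF mono sh per])
  have cl: "circle_lift f = F" using LF(1) by blast
  show ?thesis unfolding has_rotation_number_def cl using lim by blast
qed

definition Cq :: "complex \<Rightarrow> complex \<Rightarrow> real" where
  "Cq a b = (1 - Re (cnj a * b))^2 / ((1 - (cmod a)^2) * (1 - (cmod b)^2))"

lemma cosh_half_ln:
  fixes X :: real
  assumes X: "X > 0"
  shows "(cosh (\<bar>ln X\<bar> / 2))^2 = (X + 1)^2 / (4 * X)"
proof -
  have c: "cosh (\<bar>ln X\<bar> / 2) = cosh (ln X / 2)"
  proof (cases "ln X \<ge> 0")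
    case True thus ?thesis by simp
  next
    case False
    hence "\<bar>ln X\<bar> / 2 = - (ln X / 2)" by simp
    thus ?thesis by (metis cosh_minus)
  qed
  have l: "ln X / 2 = ln (sqrt X)" using X by (simp add: ln_sqrt)
  have sX: "sqrt X > 0" using X by simp
  have sXX: "sqrt X * sqrt X = X" using X by simp
  have "cosh (ln (sqrt X)) = (sqrt X + inverse (sqrt X)) / 2" by (rule cosh_ln_real[OF sX])
  hence "(cosh (ln (sqrt X)))^2 = ((sqrt X + inverse (sqrt X)) / 2)^2" by (rule arg_cong)
  also have "\<dots> = (sqrt X * sqrt X + 2 + 1 / (sqrt X * sqrt X)) / 4"
    using sX by (simp add: power2_eq_square field_simps)
  also have "\<dots> = (X + 2 + 1 / X) / 4" unfolding sXX ..
  also have "\<dots> = (X + 1)^2 / (4 * X)" using X by (simp add: field_simps power2_eq_square)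
  finally show ?thesis unfolding c l .
qed

lemma quad_roots:
  fixes n p q t :: real
  assumes n: "n > 0" and q: "q < 0"
  defines "D \<equiv> p^2 - n * q"
  defines "t1 \<equiv> (- p - sqrt D) / n" and "t2 \<equiv> (- p + sqrt D) / n"
  shows "D > 0" and "n * t^2 + 2 * p * t + q = n * (t - t1) * (t - t2)"
    and "t1 + t2 = - 2 * p / n" and "t1 * t2 = q / n" and "t1 < 0" and "0 < t2"
proof -
  have nq: "n * q < 0" by (rule mult_pos_neg[OF n q])
  have p2: "p^2 \<ge> 0" by simp
  show D: "D > 0" unfolding D_def using nq p2 by linarith
  have sDD: "sqrt D * sqrt D = D" using D by simp
  show s: "t1 + t2 = - 2 * p / n" unfolding t1_def t2_def using n by (simp add: field_simps)
  have pr0: "(- p - sqrt D) * (- p + sqrt D) = p^2 - D"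
    using sDD by (simp add: algebra_simps power2_eq_square)
  have "t1 * t2 = ((- p - sqrt D) * (- p + sqrt D)) / (n * n)" unfolding t1_def t2_def by simp
  also have "\<dots> = (p^2 - D) / (n * n)" unfolding pr0 ..
  also have "\<dots> = q / n" unfolding D_def using n by (simp add: field_simps power2_eq_square)
  finally show pr: "t1 * t2 = q / n" .
  show "n * t^2 + 2 * p * t + q = n * (t - t1) * (t - t2)"
  proof -
    have "n * (t - t1) * (t - t2) = n * t^2 - n * (t1 + t2) * t + n * (t1 * t2)"
      by (simp add: algebra_simps power2_eq_square)
    also have "\<dots> = n * t^2 + 2 * p * t + q" unfolding s pr using n by simp
    finally show ?thesis by simp
  qed
  have "\<bar>p\<bar> < sqrt D"
  proof -
    have "p^2 < D" unfolding D_def using nq by simp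
    hence "sqrt (p^2) < sqrt D" by (rule real_sqrt_less_mono)
    thus ?thesis by simp
  qed
  hence a1: "- p - sqrt D < 0" and a2: "- p + sqrt D > 0" by linarith+
  show "t1 < 0" unfolding t1_def using a1 n by (rule divide_neg_pos)
  show "0 < t2" unfolding t2_def using a2 n by (rule divide_pos_pos)
qed

lemma re_cnj_sub: "Re (cnj a * (b - a)) = Re (cnj a * b) - (cmod a)^2"
  using re_cnj_self[of a] by (simp add: right_diff_distrib)

lemma sq_eq1: "(x::real) \<ge> 0 \<Longrightarrow> x^2 = 1 \<longleftrightarrow> x = 1"
  by (auto simp: power2_eq_1_iff)

lemma chord_setup:
  assumes a: "cmod a < 1" and b: "cmod b < 1" and ab: "a \<noteq> b"
  defines "u \<equiv> b - a"
  defines "n \<equiv> (cmod u)^2" and "p \<equiv> Re (cnj a * u)" and "q \<equiv> (cmod a)^2 - 1"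
  defines "D \<equiv> p^2 - n * q"
  defines "t1 \<equiv> (- p - sqrt D) / n" and "t2 \<equiv> (- p + sqrt D) / n"
  shows "\<And>t. cmod (a + of_real t * u) = 1 \<longleftrightarrow> t = t1 \<or> t = t2"
    and "t1 < 0" and "1 < t2" and "t1 + t2 = - 2 * p / n" and "t1 * t2 = q / n"
    and "n > 0" and "q < 0" and "p + q = Re (cnj a * b) - 1" and "2 * p + q + n = (cmod b)^2 - 1"
proof -
  have u: "u \<noteq> 0" unfolding u_def using ab by simp
  show n: "n > 0" unfolding n_def using u by simp
  have a2: "(cmod a)^2 < 1" using a by (simp add: power_less_one_iff)
  show q: "q < 0" unfolding q_def using a2 by simp
  note QR = quad_roots[OF n q, where p = p, folded D_def, folded t1_def t2_def]
  have QR2: "n * t^2 + 2 * p * t + q = n * (t - t1) * (t - t2)" for t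
    using quad_roots(2)[OF n q, where p = p and t = t, folded D_def, folded t1_def t2_def] .
  show s: "t1 + t2 = - 2 * p / n" by (rule QR(3))
  show pr: "t1 * t2 = q / n" by (rule QR(4))
  show t1: "t1 < 0" by (rule QR(5))
  have sq: "(cmod (a + of_real t * u))^2 = 1 + (n * t^2 + 2 * p * t + q)" for t
    using cmod_line_sq[of a t u] unfolding n_def p_def q_def by (simp add: algebra_simps)
  show "cmod (a + of_real t * u) = 1 \<longleftrightarrow> t = t1 \<or> t = t2" for t
  proof -
    have "cmod (a + of_real t * u) = 1 \<longleftrightarrow> (cmod (a + of_real t * u))^2 = 1"
      using sq_eq1[OF norm_ge_zero[of "a + of_real t * u"]] by simp
    also have "\<dots> \<longleftrightarrow> n * t^2 + 2 * p * t + q = 0" unfolding sq by simp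
    also have "\<dots> \<longleftrightarrow> n * (t - t1) * (t - t2) = 0" using QR2[of t] by simp
    also have "\<dots> \<longleftrightarrow> t = t1 \<or> t = t2" using n by auto
    finally show ?thesis .
  qed
  have bu: "a + of_real 1 * u = b" unfolding u_def by simp
  have "(cmod b)^2 = 1 + (n * 1^2 + 2 * p * 1 + q)" using sq[of 1] unfolding bu .
  moreover have b2: "(cmod b)^2 < 1" using b by (simp add: power_less_one_iff)
  ultimately have f1: "n + 2 * p + q < 0" by simp
  show "2 * p + q + n = (cmod b)^2 - 1" using sq[of 1] unfolding bu by simp
  have "n * (1 - t1) * (1 - t2) < 0" using f1 QR2[of 1] by simp
  moreover have "n * (1 - t1) > 0" using n t1 by simp
  ultimately have "1 - t2 < 0"
  proof -
    assume h1: "n * (1 - t1) * (1 - t2) < 0" and h2: "n * (1 - t1) > 0"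
    show ?thesis
    proof (rule ccontr)
      assume "\<not> 1 - t2 < 0"
      hence "1 - t2 \<ge> 0" by simp
      hence "n * (1 - t1) * (1 - t2) \<ge> 0" using h2 by simp
      thus False using h1 by simp
    qed
  qed
  thus "1 < t2" by simp
  show "p + q = Re (cnj a * b) - 1" unfolding p_def q_def u_def re_cnj_sub by simp
qed

lemma dK_cosh:
  assumes a: "cmod a < 1" and b: "cmod b < 1"
  shows "(cosh (dK a b))^2 = Cq a b"
proof (cases "a = b")
  case True
  have "(cmod a)^2 < 1" using a by (simp add: power_less_one_iff)
  hence "1 - (cmod a)^2 \<noteq> 0" by simp
  moreover have "Re (cnj a * a) = (cmod a)^2" by (rule re_cnj_self)
  ultimately show ?thesis unfolding True dK_def Cq_def by (simp add: power2_eq_square)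
next
  case ab: False
  define u where "u = b - a"
  define n where "n = (cmod u)^2"
  define p where "p = Re (cnj a * u)"
  define q where "q = (cmod a)^2 - 1"
  define D where "D = p^2 - n * q"
  define t1 where "t1 = (- p - sqrt D) / n"
  define t2 where "t2 = (- p + sqrt D) / n"
  note CS = chord_setup[OF a b ab, folded u_def, folded n_def p_def q_def, folded D_def, folded t1_def t2_def]
  have u: "u \<noteq> 0" unfolding u_def using ab by simp
  define e1 where "e1 = a + of_real t1 * u"
  define e2 where "e2 = a + of_real t2 * u"
  have t12: "t1 \<noteq> t2" using CS(2,3) by simp
  have e12: "e1 \<noteq> e2" unfolding e1_def e2_def using t12 u by simp
  have Seq: "(v \<in> sphere 0 1 \<and> v \<in> line_thru a b) \<longleftrightarrow> (v = e1 \<or> v = e2)" for v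
  proof -
    have "v \<in> line_thru a b \<longleftrightarrow> (\<exists>t. v = a + of_real t * u)" unfolding line_thru_def u_def by auto
    hence "(v \<in> sphere 0 1 \<and> v \<in> line_thru a b) \<longleftrightarrow> (\<exists>t. v = a + of_real t * u \<and> cmod (a + of_real t * u) = 1)"
      by auto
    also have "\<dots> \<longleftrightarrow> (\<exists>t. v = a + of_real t * u \<and> (t = t1 \<or> t = t2))" using CS(1) by simp
    also have "\<dots> \<longleftrightarrow> (v = e1 \<or> v = e2)" unfolding e1_def e2_def by auto
    finally show ?thesis .
  qed
  define v1 where "v1 = chord_end1 a b"
  define v2 where "v2 = chord_end2 a b"
  have "v1 \<in> sphere 0 1 \<and> v1 \<in> line_thru a b" unfolding v1_def chord_end1_def
    by (rule someI[of _ e1]) (use Seq in blast)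
  hence v1: "v1 = e1 \<or> v1 = e2" using Seq by blast
  have ex2: "\<exists>v. v \<in> sphere 0 1 \<and> v \<in> line_thru a b \<and> v \<noteq> v1"
  proof (cases "v1 = e1")
    case True thus ?thesis using Seq e12 by blast
  next
    case False thus ?thesis using Seq by blast
  qed
  have "v2 \<in> sphere 0 1 \<and> v2 \<in> line_thru a b \<and> v2 \<noteq> v1"
    unfolding v2_def chord_end2_def v1_def[symmetric] by (rule someI_ex[OF ex2])
  hence v2: "(v2 = e1 \<or> v2 = e2) \<and> v2 \<noteq> v1" using Seq by blast
  have cu: "cmod u > 0" using u by simp
  have nb: "cmod (b - (a + of_real t * u)) = \<bar>1 - t\<bar> * cmod u" for t
  proof -
    have "b - (a + of_real t * u) = of_real (1 - t) * u" unfolding u_def by (simp add: algebra_simps)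
    thus ?thesis by (simp only: norm_mult norm_of_real)
  qed
  have na: "cmod (a - (a + of_real t * u)) = \<bar>t\<bar> * cmod u" for t
    by (simp add: norm_mult)
  have t1: "t1 < 0" and t2: "1 < t2" using CS(2,3) by auto
  define X where "X = ((1 - t1) * t2) / ((- t1) * (t2 - 1))"
  define N where "N = (1 - t1) * t2"
  define Dn where "Dn = (- t1) * (t2 - 1)"
  have Np: "N > 0" unfolding N_def using t1 t2 by simp
  have Dp: "Dn > 0" unfolding Dn_def using t1 t2 by (intro mult_pos_pos) auto
  have XND: "X = N / Dn" unfolding X_def N_def Dn_def ..
  have Xp: "X > 0" unfolding XND using Np Dp by simp
  have dk: "dK a b = \<bar>ln X\<bar> / 2"
  proof -
    have dd: "dK a b = \<bar>ln ((cmod (b - v1) * cmod (a - v2)) / (cmod (a - v1) * cmod (b - v2)))\<bar> / 2"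
      unfolding dK_def v1_def v2_def using ab by (simp add: Let_def)
    show ?thesis
    proof (cases "v1 = e1")
      case True
      hence v2e: "v2 = e2" using v2 by blast
      have "(cmod (b - v1) * cmod (a - v2)) / (cmod (a - v1) * cmod (b - v2))
          = (\<bar>1 - t1\<bar> * cmod u * (\<bar>t2\<bar> * cmod u)) / (\<bar>t1\<bar> * cmod u * (\<bar>1 - t2\<bar> * cmod u))"
        unfolding True v2e e1_def e2_def nb na ..
      also have "\<dots> = X" unfolding X_def using t1 t2 cu by (simp add: field_simps)
      finally show ?thesis unfolding dd by simp
    next
      case False
      hence v1e: "v1 = e2" using v1 by blast
      hence v2e: "v2 = e1" using v2 by blast
      have "(cmod (b - v1) * cmod (a - v2)) / (cmod (a - v1) * cmod (b - v2))
          = (\<bar>1 - t2\<bar> * cmod u * (\<bar>t1\<bar> * cmod u)) / (\<bar>t2\<bar> * cmod u * (\<bar>1 - t1\<bar> * cmod u))"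
        unfolding v1e v2e e1_def e2_def nb na ..
      also have "\<dots> = inverse X" unfolding X_def using t1 t2 cu by (simp add: field_simps)
      finally show ?thesis unfolding dd using Xp by (simp add: ln_inverse)
    qed
  qed
  have c1: "(cosh (dK a b))^2 = (X + 1)^2 / (4 * X)" unfolding dk by (rule cosh_half_ln[OF Xp])
  have "(X + 1)^2 / (4 * X) = (N + Dn)^2 / (4 * (N * Dn))"
    unfolding XND using Np Dp by (simp add: field_simps power2_eq_square)
  also have "N + Dn = (t1 + t2) - 2 * (t1 * t2)" unfolding N_def Dn_def by (simp add: algebra_simps)
  also have "N * Dn = (- (t1 * t2)) * ((t1 + t2) - t1 * t2 - 1)" unfolding N_def Dn_def
    by (simp add: algebra_simps)
  also have "(t1 + t2) - 2 * (t1 * t2) = - 2 * (p + q) / n" unfolding CS(4) CS(5)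
    using CS(6) by (simp add: field_simps)
  also have "(- (t1 * t2)) * ((t1 + t2) - t1 * t2 - 1) = q * (2 * p + q + n) / n^2"
    unfolding CS(4) CS(5) using CS(6) by (simp add: field_simps power2_eq_square)
  also have "(- 2 * (p + q) / n)^2 / (4 * (q * (2 * p + q + n) / n^2)) = (p + q)^2 / (q * (2 * p + q + n))"
  proof -
    have "(cmod b)^2 < 1" using b by (simp add: power_less_one_iff)
    hence "2 * p + q + n \<noteq> 0" using CS(9) by simp
    moreover have "q \<noteq> 0" using CS(7) by simp
    ultimately have K: "q * (2 * p + q + n) \<noteq> 0" by simp
    define K where "K = q * (2 * p + q + n)"
    have K0: "K \<noteq> 0" unfolding K_def by (rule K)
    have n0: "n \<noteq> 0" using CS(6) by simp
    have "(- 2 * (p + q) / n)^2 = 4 * (p + q)^2 / n^2"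
      by (simp only: power_divide power_mult_distrib) (simp add: power2_eq_square)
    moreover have "(4 * (p + q)^2 / n^2) / (4 * (K / n^2)) = (p + q)^2 / K"
      using n0 K0 by (simp add: field_simps)
    ultimately show ?thesis unfolding K_def by simp
  qed
  also have "(p + q)^2 = (1 - Re (cnj a * b))^2" unfolding CS(8) by (simp add: power2_commute)
  also have "q * (2 * p + q + n) = (1 - (cmod a)^2) * (1 - (cmod b)^2)"
  proof -
    have "q * (2 * p + q + n) = q * ((cmod b)^2 - 1)" using CS(9) by simp
    also have "\<dots> = (1 - (cmod a)^2) * (1 - (cmod b)^2)" unfolding q_def by (simp add: algebra_simps)
    finally show ?thesis .
  qed
  finally show ?thesis using c1 unfolding Cq_def by simp
qed

definition Mh :: "real \<Rightarrow> complex \<Rightarrow> complex" where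
  "Mh h z = Complex ((Re z - h) / (1 - h * Re z)) (Im z * sqrt (1 - h^2) / (1 - h * Re z))"

lemma den_pos:
  assumes "\<bar>h\<bar> < 1" "cmod z \<le> 1"
  shows "1 - h * Re z > 0"
proof -
  have r: "\<bar>Re z\<bar> \<le> 1" using abs_Re_le_cmod[of z] assms(2) by linarith
  have "\<bar>h * Re z\<bar> = \<bar>h\<bar> * \<bar>Re z\<bar>" by (simp add: abs_mult)
  also have "\<dots> \<le> \<bar>h\<bar>" using r by (simp add: mult_left_le)
  finally have "\<bar>h * Re z\<bar> < 1" using assms(1) by linarith
  thus ?thesis by linarith
qed

lemma h2: "\<bar>h\<bar> < 1 \<Longrightarrow> 1 - h^2 > (0::real)"
  by (simp add: abs_square_less_1)

lemma Mh_Re: "Re (Mh h z) = (Re z - h) / (1 - h * Re z)" unfolding Mh_def by simp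
lemma Mh_Im: "Im (Mh h z) = Im z * sqrt (1 - h^2) / (1 - h * Re z)" unfolding Mh_def by simp

lemma alg_norm:
  fixes x y h d :: real
  assumes d0: "d \<noteq> 0" and dd: "d = 1 - h * x"
  shows "1 - ((x - h) / d)^2 - y^2 * (1 - h^2) / d^2 = (1 - h^2) * (1 - x^2 - y^2) / d^2"
proof -
  have "1 - ((x - h) / d)^2 - y^2 * (1 - h^2) / d^2 = (d^2 - (x - h)^2 - y^2 * (1 - h^2)) / d^2"
    using d0 by (simp add: field_simps power2_eq_square)
  also have "d^2 - (x - h)^2 - y^2 * (1 - h^2) = (1 - h^2) * (1 - x^2 - y^2)"
    unfolding dd by (simp add: algebra_simps power2_eq_square)
  finally show ?thesis .
qed

lemma alg_inv_re:
  fixes x h d :: real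
  assumes d0: "d \<noteq> 0" and dd: "d = 1 - h * x" and hh: "1 - h^2 \<noteq> 0"
  shows "1 + h * ((x - h) / d) = (1 - h^2) / d" and "((x - h) / d + h) / (1 + h * ((x - h) / d)) = x"
proof -
  have a: "1 + h * ((x - h) / d) = (d + h * (x - h)) / d" using d0 by (simp add: field_simps)
  have a2: "d + h * (x - h) = 1 - h^2" unfolding dd by (simp add: algebra_simps power2_eq_square)
  show e1: "1 + h * ((x - h) / d) = (1 - h^2) / d" unfolding a a2 ..
  have b: "(x - h) / d + h = (x - h + h * d) / d" using d0 by (simp add: field_simps)
  have b2: "x - h + h * d = x * (1 - h^2)" unfolding dd by (simp add: algebra_simps power2_eq_square)
  show "((x - h) / d + h) / (1 + h * ((x - h) / d)) = x" unfolding e1 b b2 using d0 hh by simp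
qed

lemma alg_crs:
  fixes xa ya xb yb xc yc h s da db dc :: real
  assumes da: "da = 1 - h * xa" and db: "db = 1 - h * xb" and dc: "dc = 1 - h * xc"
    and na: "da \<noteq> 0" and nb: "db \<noteq> 0" and nc: "dc \<noteq> 0"
  shows "((xb - h) / db - (xa - h) / da) * (yc * s / dc - ya * s / da)
       - (yb * s / db - ya * s / da) * ((xc - h) / dc - (xa - h) / da)
     = s * (1 - h^2) * ((xb - xa) * (yc - ya) - (yb - ya) * (xc - xa)) / (da * db * dc)"
proof -
  have e1: "(xb - h) / db - (xa - h) / da = (1 - h^2) * (xb - xa) / (da * db)"
  proof -
    have "(xb - h) / db - (xa - h) / da = ((xb - h) * da - (xa - h) * db) / (da * db)"
      using na nb by (simp add: field_simps)
    also have "(xb - h) * da - (xa - h) * db = (1 - h^2) * (xb - xa)"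
      unfolding da db by (simp add: algebra_simps power2_eq_square)
    finally show ?thesis .
  qed
  have e2: "(xc - h) / dc - (xa - h) / da = (1 - h^2) * (xc - xa) / (da * dc)"
  proof -
    have "(xc - h) / dc - (xa - h) / da = ((xc - h) * da - (xa - h) * dc) / (da * dc)"
      using na nc by (simp add: field_simps)
    also have "(xc - h) * da - (xa - h) * dc = (1 - h^2) * (xc - xa)"
      unfolding da dc by (simp add: algebra_simps power2_eq_square)
    finally show ?thesis .
  qed
  have e3: "yc * s / dc - ya * s / da = s * (yc * da - ya * dc) / (da * dc)"
    using na nc by (simp add: field_simps)
  have e4: "yb * s / db - ya * s / da = s * (yb * da - ya * db) / (da * db)"
    using na nb by (simp add: field_simps)
  have key: "(xb - xa) * (yc * da - ya * dc) - (yb * da - ya * db) * (xc - xa)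
      = da * ((xb - xa) * (yc - ya) - (yb - ya) * (xc - xa))"
    unfolding da db dc by (simp add: algebra_simps)
  have "(1 - h^2) * (xb - xa) / (da * db) * (s * (yc * da - ya * dc) / (da * dc))
      - s * (yb * da - ya * db) / (da * db) * ((1 - h^2) * (xc - xa) / (da * dc))
      = s * (1 - h^2) * ((xb - xa) * (yc * da - ya * dc) - (yb * da - ya * db) * (xc - xa)) / (da * da * db * dc)"
    using na nb nc by (simp add: field_simps)
  also have "\<dots> = s * (1 - h^2) * ((xb - xa) * (yc - ya) - (yb - ya) * (xc - xa)) / (da * db * dc)"
    unfolding key using na nb nc by (simp add: field_simps)
  finally show ?thesis unfolding e1 e2 e3 e4 .
qed

lemma alg_cq:
  fixes K U VA VB da db :: real
  assumes "K \<noteq> 0" "da \<noteq> 0" "db \<noteq> 0" "VA \<noteq> 0" "VB \<noteq> 0"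
  shows "(K * U / (da * db))^2 / ((K * VA / da^2) * (K * VB / db^2)) = U^2 / (VA * VB)"
  using assms by (simp add: field_simps power2_eq_square)

lemma Mh_Im_mult:
  assumes "\<bar>h\<bar> < 1"
  shows "Im (Mh h a) * Im (Mh h b) = Im a * Im b * (1 - h^2) / ((1 - h * Re a) * (1 - h * Re b))"
proof -
  have s: "sqrt (1 - h^2) * sqrt (1 - h^2) = 1 - h^2" using h2[OF assms] by simp
  have "Im (Mh h a) * Im (Mh h b) = Im a * Im b * (sqrt (1 - h^2) * sqrt (1 - h^2)) / ((1 - h * Re a) * (1 - h * Re b))"
    unfolding Mh_Im by simp
  thus ?thesis unfolding s .
qed

lemma Mh_norm:
  assumes h: "\<bar>h\<bar> < 1" and z: "cmod z \<le> 1"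
  shows "1 - (cmod (Mh h z))^2 = (1 - h^2) * (1 - (cmod z)^2) / (1 - h * Re z)^2"
proof -
  have d: "1 - h * Re z > 0" by (rule den_pos[OF h z])
  have i: "(Im (Mh h z))^2 = (Im z)^2 * (1 - h^2) / (1 - h * Re z)^2"
    using Mh_Im_mult[OF h, of z z] by (simp add: power2_eq_square)
  have "1 - (cmod (Mh h z))^2 = 1 - (Re (Mh h z))^2 - (Im (Mh h z))^2" by (simp add: cmod_sq)
  also have "\<dots> = 1 - ((Re z - h) / (1 - h * Re z))^2 - (Im z)^2 * (1 - h^2) / (1 - h * Re z)^2"
    unfolding i Mh_Re ..
  also have "\<dots> = (1 - h^2) * (1 - (Re z)^2 - (Im z)^2) / (1 - h * Re z)^2"
    by (rule alg_norm) (use d in auto)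
  finally show ?thesis by (simp add: cmod_sq)
qed

lemma Mh_ball:
  assumes h: "\<bar>h\<bar> < 1" and z: "cmod z < 1"
  shows "cmod (Mh h z) < 1"
proof -
  have z1: "cmod z \<le> 1" using z by simp
  have d: "1 - h * Re z > 0" by (rule den_pos[OF h z1])
  have "(cmod z)^2 < 1" using z by (simp add: power_less_one_iff)
  hence "(1 - h^2) * (1 - (cmod z)^2) / (1 - h * Re z)^2 > 0" using h2[OF h] d by simp
  hence "1 - (cmod (Mh h z))^2 > 0" unfolding Mh_norm[OF h z1] .
  hence "(cmod (Mh h z))^2 < 1" by simp
  thus ?thesis by (simp add: power_less_one_iff)
qed

lemma Mh_sphere:
  assumes h: "\<bar>h\<bar> < 1" and z: "cmod z = 1"
  shows "cmod (Mh h z) = 1"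
proof -
  have z1: "cmod z \<le> 1" using z by simp
  have "1 - (cmod (Mh h z))^2 = 0" unfolding Mh_norm[OF h z1] using z by simp
  hence "(cmod (Mh h z))^2 = 1" by simp
  thus ?thesis using sq_eq1[OF norm_ge_zero] by blast
qed

lemma Mh_inv:
  assumes h: "\<bar>h\<bar> < 1" and z: "cmod z \<le> 1"
  shows "Mh (- h) (Mh h z) = z"
proof -
  have d: "1 - h * Re z > 0" by (rule den_pos[OF h z])
  have hh: "1 - h^2 > 0" by (rule h2[OF h])
  define x where "x = Re z"
  define y where "y = Im z"
  define d where "d = 1 - h * x"
  have d0: "d \<noteq> 0" using d unfolding d_def x_def by simp
  have hh0: "1 - h^2 \<noteq> 0" using hh by simp
  note AI = alg_inv_re[OF d0 d_def hh0]
  have rz: "Re (Mh h z) = (x - h) / d" unfolding Mh_Re x_def d_def ..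
  have den2: "1 - (- h) * Re (Mh h z) = (1 - h^2) / d" unfolding rz using AI(1) by simp
  have re: "Re (Mh (- h) (Mh h z)) = x"
  proof -
    have "Re (Mh (- h) (Mh h z)) = (Re (Mh h z) - (- h)) / (1 - (- h) * Re (Mh h z))" by (rule Mh_Re)
    also have "\<dots> = ((x - h) / d + h) / (1 + h * ((x - h) / d))" unfolding rz by simp
    also have "\<dots> = x" by (rule AI(2))
    finally show ?thesis .
  qed
  have s: "sqrt (1 - h^2) * sqrt (1 - h^2) = 1 - h^2" using hh by simp
  have im: "Im (Mh (- h) (Mh h z)) = y"
  proof -
    have "Im (Mh (- h) (Mh h z)) = Im (Mh h z) * sqrt (1 - h^2) / ((1 - h^2) / d)"
      using den2 unfolding Mh_Im[of "- h"] by simp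
    also have "\<dots> = (y * sqrt (1 - h^2) / d) * sqrt (1 - h^2) / ((1 - h^2) / d)"
      unfolding Mh_Im x_def[symmetric] y_def[symmetric] d_def ..
    also have "\<dots> = y * (sqrt (1 - h^2) * sqrt (1 - h^2)) / (1 - h^2)"
      using d0 hh0 by (simp add: field_simps)
    also have "\<dots> = y" unfolding s using hh0 by simp
    finally show ?thesis .
  qed
  show ?thesis using re im unfolding x_def y_def by (simp add: complex_eq_iff)
qed

lemma Mh_Cq:
  assumes h: "\<bar>h\<bar> < 1" and a: "cmod a < 1" and b: "cmod b < 1"
  shows "Cq (Mh h a) (Mh h b) = Cq a b"
proof -
  have a1: "cmod a \<le> 1" and b1: "cmod b \<le> 1" using a b by auto
  have da: "1 - h * Re a > 0" by (rule den_pos[OF h a1])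
  have db: "1 - h * Re b > 0" by (rule den_pos[OF h b1])
  have hh: "1 - h^2 > 0" by (rule h2[OF h])
  have r: "1 - Re (cnj (Mh h a) * Mh h b) = (1 - h^2) * (1 - Re (cnj a * b)) / ((1 - h * Re a) * (1 - h * Re b))"
  proof -
    define A where "A = 1 - h * Re a"
    define B where "B = 1 - h * Re b"
    have A0: "A \<noteq> 0" using da unfolding A_def by simp
    have B0: "B \<noteq> 0" using db unfolding B_def by simp
    have "Re (cnj (Mh h a) * Mh h b) = Re (Mh h a) * Re (Mh h b) + Im (Mh h a) * Im (Mh h b)" by simp
    also have "\<dots> = (Re a - h) / A * ((Re b - h) / B) + Im a * Im b * (1 - h^2) / (A * B)"
      unfolding Mh_Im_mult[OF h] Mh_Re A_def B_def ..
    finally have "1 - Re (cnj (Mh h a) * Mh h b) = 1 - ((Re a - h) / A * ((Re b - h) / B) + Im a * Im b * (1 - h^2) / (A * B))"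
      by simp
    also have "\<dots> = (A * B - ((Re a - h) * (Re b - h) + Im a * Im b * (1 - h^2))) / (A * B)"
      using A0 B0 by (simp add: field_simps)
    also have "A * B - ((Re a - h) * (Re b - h) + Im a * Im b * (1 - h^2))
        = (1 - h^2) * (1 - Re (cnj a * b))" unfolding A_def B_def by (simp add: algebra_simps power2_eq_square)
    finally show ?thesis unfolding A_def B_def .
  qed
  have "(cmod a)^2 < 1" using a by (simp add: power_less_one_iff)
  hence a2: "1 - (cmod a)^2 \<noteq> 0" by simp
  have "(cmod b)^2 < 1" using b by (simp add: power_less_one_iff)
  hence b2: "1 - (cmod b)^2 \<noteq> 0" by simp
  have "Cq (Mh h a) (Mh h b) = ((1 - h^2) * (1 - Re (cnj a * b)) / ((1 - h * Re a) * (1 - h * Re b)))^2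
      / (((1 - h^2) * (1 - (cmod a)^2) / (1 - h * Re a)^2) * ((1 - h^2) * (1 - (cmod b)^2) / (1 - h * Re b)^2))"
    unfolding Cq_def r Mh_norm[OF h a1] Mh_norm[OF h b1] ..
  also have "\<dots> = Cq a b" unfolding Cq_def
    by (rule alg_cq) (use hh da db a2 b2 in auto)
  finally show ?thesis .
qed

lemma Mh_crs:
  assumes h: "\<bar>h\<bar> < 1" and a: "cmod a \<le> 1" and b: "cmod b \<le> 1" and c: "cmod c \<le> 1"
  shows "crs (Mh h b - Mh h a) (Mh h c - Mh h a) =
    sqrt (1 - h^2) * (1 - h^2) * crs (b - a) (c - a) / ((1 - h * Re a) * (1 - h * Re b) * (1 - h * Re c))"
proof -
  have da: "1 - h * Re a \<noteq> 0" using den_pos[OF h a] by simp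
  have db: "1 - h * Re b \<noteq> 0" using den_pos[OF h b] by simp
  have dc: "1 - h * Re c \<noteq> 0" using den_pos[OF h c] by simp
  have "crs (Mh h b - Mh h a) (Mh h c - Mh h a) =
     ((Re b - h) / (1 - h * Re b) - (Re a - h) / (1 - h * Re a)) * (Im c * sqrt (1 - h^2) / (1 - h * Re c) - Im a * sqrt (1 - h^2) / (1 - h * Re a))
      - (Im b * sqrt (1 - h^2) / (1 - h * Re b) - Im a * sqrt (1 - h^2) / (1 - h * Re a)) * ((Re c - h) / (1 - h * Re c) - (Re a - h) / (1 - h * Re a))"
    by (simp add: crs_def Mh_Re Mh_Im)
  also have "\<dots> = sqrt (1 - h^2) * (1 - h^2) * ((Re b - Re a) * (Im c - Im a) - (Im b - Im a) * (Re c - Re a)) / ((1 - h * Re a) * (1 - h * Re b) * (1 - h * Re c))"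
    by (rule alg_crs[OF refl refl refl da db dc])
  finally show ?thesis unfolding crs_def by simp
qed

definition iso :: "(complex \<Rightarrow> complex) \<Rightarrow> (complex \<Rightarrow> complex) \<Rightarrow> bool" where
  "iso \<phi> \<psi> \<longleftrightarrow> (\<forall>z. cmod z < 1 \<longrightarrow> cmod (\<phi> z) < 1 \<and> cmod (\<psi> z) < 1)
    \<and> (\<forall>z. cmod z = 1 \<longrightarrow> cmod (\<phi> z) = 1 \<and> cmod (\<psi> z) = 1)
    \<and> (\<forall>z. cmod z \<le> 1 \<longrightarrow> \<psi> (\<phi> z) = z \<and> \<phi> (\<psi> z) = z)
    \<and> (\<forall>a b. cmod a < 1 \<longrightarrow> cmod b < 1 \<longrightarrow> Cq (\<phi> a) (\<phi> b) = Cq a b)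
    \<and> (\<forall>a b c. cmod a \<le> 1 \<longrightarrow> cmod b \<le> 1 \<longrightarrow> cmod c \<le> 1 \<longrightarrow>
         sgn (crs (\<phi> b - \<phi> a) (\<phi> c - \<phi> a)) = sgn (crs (b - a) (c - a)))"

lemma iso_cball:
  assumes "iso \<phi> \<psi>" "cmod z \<le> 1"
  shows "cmod (\<phi> z) \<le> 1" "cmod (\<psi> z) \<le> 1"
  using assms unfolding iso_def by (cases "cmod z < 1"; force)+

lemma iso_comp:
  assumes 1: "iso \<phi>1 \<psi>1" and 2: "iso \<phi>2 \<psi>2"
  shows "iso (\<lambda>z. \<phi>2 (\<phi>1 z)) (\<lambda>z. \<psi>1 (\<psi>2 z))"
proof -
  note c1 = iso_cball[OF 1] and c2 = iso_cball[OF 2]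
  show ?thesis unfolding iso_def
  proof (intro conjI allI impI)
    fix z :: complex assume "cmod z < 1"
    thus "cmod (\<phi>2 (\<phi>1 z)) < 1" "cmod (\<psi>1 (\<psi>2 z)) < 1" using 1 2 unfolding iso_def by blast+
  next
    fix z :: complex assume "cmod z = 1"
    thus "cmod (\<phi>2 (\<phi>1 z)) = 1" "cmod (\<psi>1 (\<psi>2 z)) = 1" using 1 2 unfolding iso_def by blast+
  next
    fix z :: complex assume z: "cmod z \<le> 1"
    show "\<psi>1 (\<psi>2 (\<phi>2 (\<phi>1 z))) = z" using 1 2 c1(1)[OF z] z unfolding iso_def by simp
    show "\<phi>2 (\<phi>1 (\<psi>1 (\<psi>2 z))) = z" using 1 2 c2(2)[OF z] z unfolding iso_def by simp
  next
    fix a b :: complex assume "cmod a < 1" "cmod b < 1"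
    thus "Cq (\<phi>2 (\<phi>1 a)) (\<phi>2 (\<phi>1 b)) = Cq a b" using 1 2 unfolding iso_def by simp
  next
    fix a b c :: complex assume a: "cmod a \<le> 1" and b: "cmod b \<le> 1" and c: "cmod c \<le> 1"
    show "sgn (crs (\<phi>2 (\<phi>1 b) - \<phi>2 (\<phi>1 a)) (\<phi>2 (\<phi>1 c) - \<phi>2 (\<phi>1 a))) = sgn (crs (b - a) (c - a))"
      using 1 2 c1(1)[OF a] c1(1)[OF b] c1(1)[OF c] a b c unfolding iso_def by simp
  qed
qed

lemma iso_rot:
  assumes w: "cmod w = 1"
  shows "iso (\<lambda>z. w * z) (\<lambda>z. cnj w * z)"
proof -
  have w2: "(Re w)^2 + (Im w)^2 = 1" using w by (simp add: cmod_sq[symmetric])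
  have ww: "cnj w * w = 1" using w by (simp add: complex_norm_square[symmetric] mult.commute)
  have ww': "w * cnj w = 1" using ww by (simp add: mult.commute)
  have cw: "cmod (cnj w) = 1" using w by simp
  show ?thesis unfolding iso_def
  proof (intro conjI allI impI)
    fix z :: complex
    show "cmod z < 1 \<Longrightarrow> cmod (w * z) < 1" "cmod z < 1 \<Longrightarrow> cmod (cnj w * z) < 1"
      "cmod z = 1 \<Longrightarrow> cmod (w * z) = 1" "cmod z = 1 \<Longrightarrow> cmod (cnj w * z) = 1"
      using w by (simp_all add: norm_mult)
    show "cnj w * (w * z) = z" "w * (cnj w * z) = z" using ww ww' by (simp_all add: mult.assoc[symmetric])
  next
    fix a b :: complex
    have "Re (cnj (w * a) * (w * b)) = Re ((cnj w * w) * (cnj a * b))" by (simp add: algebra_simps)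
    hence "Re (cnj (w * a) * (w * b)) = Re (cnj a * b)" using ww by simp
    thus "Cq (w * a) (w * b) = Cq a b" unfolding Cq_def using w by (simp add: norm_mult)
  next
    fix a b c :: complex
    have "crs (w * b - w * a) (w * c - w * a) = crs (w * (b - a)) (w * (c - a))" by (simp add: algebra_simps)
    also have "\<dots> = crs (b - a) (c - a)" unfolding crs_rot w2 by simp
    finally show "sgn (crs (w * b - w * a) (w * c - w * a)) = sgn (crs (b - a) (c - a))" by simp
  qed
qed

lemma sgn_pos_scale: "k > 0 \<Longrightarrow> D > 0 \<Longrightarrow> sgn (k * X / D) = sgn (X::real)"
proof -
  assume k: "k > 0" and D: "D > 0"
  have "k * X / D = (k / D) * X" by simp
  moreover have "sgn (k / D) = 1" using k D by simp
  ultimately show ?thesis by (simp add: sgn_mult)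
qed

lemma iso_Mh:
  assumes h: "\<bar>h\<bar> < 1"
  shows "iso (Mh h) (Mh (- h))"
proof -
  have h': "\<bar>- h\<bar> < 1" using h by simp
  show ?thesis unfolding iso_def
  proof (intro conjI allI impI)
    fix z :: complex
    show "cmod z < 1 \<Longrightarrow> cmod (Mh h z) < 1" "cmod z < 1 \<Longrightarrow> cmod (Mh (- h) z) < 1"
      using Mh_ball[OF h] Mh_ball[OF h'] by auto
    show "cmod z = 1 \<Longrightarrow> cmod (Mh h z) = 1" "cmod z = 1 \<Longrightarrow> cmod (Mh (- h) z) = 1"
      using Mh_sphere[OF h] Mh_sphere[OF h'] by auto
    show "cmod z \<le> 1 \<Longrightarrow> Mh (- h) (Mh h z) = z" using Mh_inv[OF h] by auto
    show "cmod z \<le> 1 \<Longrightarrow> Mh h (Mh (- h) z) = z" using Mh_inv[OF h'] by auto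
  next
    fix a b :: complex
    show "cmod a < 1 \<Longrightarrow> cmod b < 1 \<Longrightarrow> Cq (Mh h a) (Mh h b) = Cq a b" using Mh_Cq[OF h] by auto
  next
    fix a b c :: complex
    assume a: "cmod a \<le> 1" and b: "cmod b \<le> 1" and c: "cmod c \<le> 1"
    have k: "sqrt (1 - h^2) * (1 - h^2) > 0" using h2[OF h] by simp
    have d: "(1 - h * Re a) * (1 - h * Re b) * (1 - h * Re c) > 0"
      using den_pos[OF h a] den_pos[OF h b] den_pos[OF h c] by simp
    show "sgn (crs (Mh h b - Mh h a) (Mh h c - Mh h a)) = sgn (crs (b - a) (c - a))"
      unfolding Mh_crs[OF h a b c] by (rule sgn_pos_scale[OF k d])
  qed
qed

lemma dK_nonneg: "dK a b \<ge> 0"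
  unfolding dK_def by (simp add: Let_def)

lemma dK_from_cosh:
  assumes "x \<ge> 0" "y \<ge> (0::real)" "(cosh x)^2 = (cosh y)^2"
  shows "x = y"
proof -
  have "cosh x > 0" "cosh y > 0" using cosh_real_ge_1[of x] cosh_real_ge_1[of y] by auto
  hence "cosh x = cosh y" using assms(3) by (simp add: power2_eq_iff_nonneg)
  thus ?thesis using assms(1,2) cosh_real_nonneg_le_iff by (metis order_antisym order_refl)
qed

lemma iso_dK:
  assumes iso: "iso \<phi> \<psi>" and a: "cmod a < 1" and b: "cmod b < 1"
  shows "dK (\<phi> a) (\<phi> b) = dK a b"
proof -
  have pa: "cmod (\<phi> a) < 1" and pb: "cmod (\<phi> b) < 1" using iso a b unfolding iso_def by auto
  have "(cosh (dK (\<phi> a) (\<phi> b)))^2 = (cosh (dK a b))^2"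
    unfolding dK_cosh[OF pa pb] dK_cosh[OF a b] using iso a b unfolding iso_def by simp
  thus ?thesis by (rule dK_from_cosh[OF dK_nonneg dK_nonneg])
qed

lemma line_crs:
  assumes "P \<noteq> Q"
  shows "S \<in> line_thru P Q \<longleftrightarrow> crs (Q - P) (S - P) = 0"
proof
  assume "S \<in> line_thru P Q"
  then obtain t where "S = P + of_real t * (Q - P)" unfolding line_thru_def by blast
  hence "S - P = of_real t * (Q - P)" by simp
  thus "crs (Q - P) (S - P) = 0" by (simp add: crs_scale_right crs_self)
next
  assume "crs (Q - P) (S - P) = 0"
  moreover have "Q - P \<noteq> 0" using assms by simp
  ultimately have "S - P = of_real ((Re (Q - P) * Re (S - P) + Im (Q - P) * Im (S - P)) / (cmod (Q - P))^2) * (Q - P)"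
    by (rule crs_zero_parallel)
  hence "S = P + of_real ((Re (Q - P) * Re (S - P) + Im (Q - P) * Im (S - P)) / (cmod (Q - P))^2) * (Q - P)"
    by (rule diff_eq_to)
  thus "S \<in> line_thru P Q" by (rule line_thru_mem)
qed

lemma iso_sgn0:
  assumes iso: "iso \<phi> \<psi>" and "cmod a \<le> 1" "cmod b \<le> 1" "cmod c \<le> 1"
  shows "crs (\<phi> b - \<phi> a) (\<phi> c - \<phi> a) = 0 \<longleftrightarrow> crs (b - a) (c - a) = 0"
proof -
  have "sgn (crs (\<phi> b - \<phi> a) (\<phi> c - \<phi> a)) = sgn (crs (b - a) (c - a))"
    using iso assms(2-4) unfolding iso_def by blast
  thus ?thesis by (metis sgn_0_0)
qed

lemma iso_deltaK:
  assumes iso: "iso \<phi> \<psi>" and P: "cmod P < 1" and Q: "cmod Q < 1" and R: "cmod R < 1" and PQ: "P \<noteq> Q"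
  shows "deltaK (\<phi> P) (\<phi> Q) (\<phi> R) = deltaK P Q R"
proof -
  have P1: "cmod P \<le> 1" and Q1: "cmod Q \<le> 1" using P Q by auto
  have inv: "\<psi> (\<phi> z) = z" "\<phi> (\<psi> z) = z" if "cmod z \<le> 1" for z using iso that unfolding iso_def by auto
  have PQ': "\<phi> P \<noteq> \<phi> Q" using inv(1)[OF P1] inv(1)[OF Q1] PQ by metis
  have "{dK (\<phi> R) S | S. S \<in> line_thru (\<phi> P) (\<phi> Q) \<inter> Dsk} = {dK R S | S. S \<in> line_thru P Q \<inter> Dsk}"
  proof (intro set_eqI iffI)
    fix d assume "d \<in> {dK (\<phi> R) S | S. S \<in> line_thru (\<phi> P) (\<phi> Q) \<inter> Dsk}"
    then obtain S where S: "S \<in> line_thru (\<phi> P) (\<phi> Q)" "cmod S < 1" and d: "d = dK (\<phi> R) S"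
      unfolding Dsk_def by auto
    define T where "T = \<psi> S"
    have T1: "cmod T < 1" unfolding T_def using iso S(2) unfolding iso_def by blast
    have ST: "\<phi> T = S" unfolding T_def using inv(2)[of S] S(2) by simp
    have "crs (\<phi> Q - \<phi> P) (\<phi> T - \<phi> P) = 0" using S(1) line_crs[OF PQ'] ST by simp
    hence "crs (Q - P) (T - P) = 0" using iso_sgn0[OF iso P1 Q1] T1 by simp
    hence "T \<in> line_thru P Q" using line_crs[OF PQ] by simp
    moreover have "d = dK R T" unfolding d ST[symmetric] by (rule iso_dK[OF iso R T1])
    ultimately show "d \<in> {dK R S | S. S \<in> line_thru P Q \<inter> Dsk}" using T1 unfolding Dsk_def by auto
  next
    fix d assume "d \<in> {dK R S | S. S \<in> line_thru P Q \<inter> Dsk}"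
    then obtain T where T: "T \<in> line_thru P Q" "cmod T < 1" and d: "d = dK R T"
      unfolding Dsk_def by auto
    have "crs (Q - P) (T - P) = 0" using T(1) line_crs[OF PQ] by simp
    hence "crs (\<phi> Q - \<phi> P) (\<phi> T - \<phi> P) = 0" using iso_sgn0[OF iso P1 Q1] T(2) by simp
    hence "\<phi> T \<in> line_thru (\<phi> P) (\<phi> Q)" using line_crs[OF PQ'] by simp
    moreover have "cmod (\<phi> T) < 1" using iso T(2) unfolding iso_def by blast
    moreover have "d = dK (\<phi> R) (\<phi> T)" unfolding d by (rule iso_dK[OF iso R T(2), symmetric])
    ultimately show "d \<in> {dK (\<phi> R) S | S. S \<in> line_thru (\<phi> P) (\<phi> Q) \<inter> Dsk}" unfolding Dsk_def by auto
  qed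
  thus ?thesis unfolding deltaK_def by simp
qed

lemma not_collinear_crs:
  assumes "\<not> collinear {P, Q, R::complex}"
  shows "P \<noteq> Q" and "crs (Q - P) (R - P) \<noteq> 0"
proof -
  show PQ: "P \<noteq> Q"
  proof
    assume "P = Q"
    hence "{P, Q, R} = {P, R}" by auto
    thus False using assms collinear_2 by metis
  qed
  show "crs (Q - P) (R - P) \<noteq> 0"
  proof
    assume z: "crs (Q - P) (R - P) = 0"
    have "R \<in> line_thru P Q" using line_crs[OF PQ] z by simp
    then obtain t where t: "R = P + of_real t * (Q - P)" unfolding line_thru_def by blast
    have "collinear {P, Q, R}" unfolding collinear_alt
    proof (rule exI[of _ P], rule exI[of _ "Q - P"], rule ballI)
      fix x assume "x \<in> {P, Q, R}"
      hence "x = P + 0 *\<^sub>R (Q - P) \<or> x = P + 1 *\<^sub>R (Q - P) \<or> x = P + t *\<^sub>R (Q - P)"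
        using t by (auto simp: scaleR_conv_of_real)
      thus "\<exists>c. x = P + c *\<^sub>R (Q - P)" by blast
    qed
    thus False using assms by simp
  qed
qed

lemma rot_to_real:
  assumes "P \<noteq> Q"
  defines "w \<equiv> cnj (Q - P) / of_real (cmod (Q - P))"
  shows "cmod w = 1" and "Im (w * Q) = Im (w * P)"
proof -
  have n: "cmod (Q - P) \<noteq> 0" using assms(1) by simp
  show "cmod w = 1" unfolding w_def norm_divide complex_mod_cnj using n by simp
  have "w * (Q - P) = cnj (Q - P) * (Q - P) / of_real (cmod (Q - P))"
    unfolding w_def by (simp only: times_divide_eq_left)
  hence "Im (w * (Q - P)) = Im (cnj (Q - P) * (Q - P)) / cmod (Q - P)"
    by (simp only: Im_divide_of_real)
  moreover have "Im (cnj (Q - P) * (Q - P)) = 0" by (simp add: algebra_simps)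
  ultimately have "Im (w * (Q - P)) = 0" by simp
  thus "Im (w * Q) = Im (w * P)" by (simp add: right_diff_distrib)
qed

definition Vh :: "real \<Rightarrow> complex \<Rightarrow> complex" where
  "Vh h z = \<i> * Mh h (- \<i> * z)"

lemma iso_Vh:
  assumes "\<bar>h\<bar> < 1"
  shows "iso (Vh h) (Vh (- h))"
proof -
  have i1: "cmod (- \<i>) = 1" "cmod \<i> = 1" by simp_all
  have "iso (\<lambda>z. \<i> * Mh h (- \<i> * z)) (\<lambda>z. cnj (- \<i>) * (Mh (- h) (cnj \<i> * z)))"
    using iso_comp[OF iso_comp[OF iso_rot[OF i1(1)] iso_Mh[OF assms]] iso_rot[OF i1(2)]] by simp
  moreover have "(\<lambda>z. cnj (- \<i>) * (Mh (- h) (cnj \<i> * z))) = Vh (- h)" unfolding Vh_def by (intro ext) simp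
  moreover have "(\<lambda>z. \<i> * Mh h (- \<i> * z)) = Vh h" unfolding Vh_def by (intro ext) simp
  ultimately show ?thesis by simp
qed

lemma Vh_Im: "Im (Vh h z) = (Im z - h) / (1 - h * Im z)"
  unfolding Vh_def by (simp add: Mh_Re)

lemma Mh_Im0: "Im z = 0 \<Longrightarrow> Im (Mh h z) = 0"
  by (simp add: Mh_Im)

lemma Mh_Re_self: "Re z = h \<Longrightarrow> Re (Mh h z) = 0"
  by (simp add: Mh_Re)

lemma normalize:
  assumes P: "cmod P < 1" and Q: "cmod Q < 1" and R: "cmod R < 1"
    and nc: "\<not> collinear {P, Q, R}"
  shows "\<exists>\<phi> \<psi>. iso \<phi> \<psi> \<and> Im (\<phi> P) = 0 \<and> Im (\<phi> Q) = 0 \<and> Re (\<phi> R) = 0 \<and> Im (\<phi> R) > 0"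
proof -
  have PQ: "P \<noteq> Q" and cr: "crs (Q - P) (R - P) \<noteq> 0" using not_collinear_crs[OF nc] by auto
  define w where "w = cnj (Q - P) / of_real (cmod (Q - P))"
  have w1: "cmod w = 1" and wQ: "Im (w * Q) = Im (w * P)" using rot_to_real[OF PQ] unfolding w_def by auto
  note I1 = iso_rot[OF w1]
  define h where "h = Im (w * P)"
  have "\<bar>h\<bar> \<le> cmod (w * P)" unfolding h_def by (rule abs_Im_le_cmod)
  also have "\<dots> < 1" using P w1 by (simp add: norm_mult)
  finally have h: "\<bar>h\<bar> < 1" .
  note I2 = iso_comp[OF I1 iso_Vh[OF h]]
  define R2 where "R2 = Vh h (w * R)"
  have R2b: "cmod R2 < 1" unfolding R2_def using I2 R unfolding iso_def by auto
  define x where "x = Re R2"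
  have x: "\<bar>x\<bar> < 1" unfolding x_def using abs_Re_le_cmod[of R2] R2b by linarith
  note I3 = iso_comp[OF I2 iso_Mh[OF x]]
  define \<phi>3 where "\<phi>3 = (\<lambda>z. Mh x (Vh h (w * z)))"
  define \<psi>3 where "\<psi>3 = (\<lambda>z. cnj w * Vh (- h) (Mh (- x) z))"
  have I3': "iso \<phi>3 \<psi>3" using I3 unfolding \<phi>3_def \<psi>3_def by simp
  have ImP: "Im (\<phi>3 P) = 0" unfolding \<phi>3_def
    by (rule Mh_Im0) (simp only: Vh_Im h_def diff_self div_0)
  have ImQ: "Im (\<phi>3 Q) = 0" unfolding \<phi>3_def
    by (rule Mh_Im0) (simp only: Vh_Im h_def wQ diff_self div_0)
  have ReR: "Re (\<phi>3 R) = 0" unfolding \<phi>3_def by (rule Mh_Re_self) (simp add: x_def R2_def)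
  have P1: "cmod P \<le> 1" and Q1: "cmod Q \<le> 1" and R1: "cmod R \<le> 1" using P Q R by auto
  have "sgn (crs (\<phi>3 Q - \<phi>3 P) (\<phi>3 R - \<phi>3 P)) = sgn (crs (Q - P) (R - P))"
    using I3' P1 Q1 R1 unfolding iso_def by blast
  hence "crs (\<phi>3 Q - \<phi>3 P) (\<phi>3 R - \<phi>3 P) \<noteq> 0" using cr by (metis sgn_0_0)
  hence ImR: "Im (\<phi>3 R) \<noteq> 0" using ImP ImQ unfolding crs_def by auto
  show ?thesis
  proof (cases "Im (\<phi>3 R) > 0")
    case True thus ?thesis using I3' ImP ImQ ReR by blast
  next
    case False
    hence neg: "Im (\<phi>3 R) < 0" using ImR by simp
    have m1: "cmod (-1 :: complex) = 1" by simp
    have I4: "iso (\<lambda>z. -1 * \<phi>3 z) (\<lambda>z. \<psi>3 (cnj (-1) * z))" by (rule iso_comp[OF I3' iso_rot[OF m1]])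
    show ?thesis
      by (rule exI[of _ "\<lambda>z. -1 * \<phi>3 z"], rule exI[of _ "\<lambda>z. \<psi>3 (cnj (-1) * z)"])
         (use I4 ImP ImQ ReR neg in simp)
  qed
qed

lemma dK_mono:
  assumes "cmod a < 1" "cmod b < 1" "cmod c < 1" "d < 1" "d \<ge> 0" "Cq a b \<le> Cq a c"
  shows "dK a b \<le> dK a c"
proof -
  have "(cosh (dK a b))^2 \<le> (cosh (dK a c))^2" using dK_cosh assms by simp
  moreover have "cosh (dK a b) > 0" "cosh (dK a c) > 0"
    using cosh_real_ge_1[of "dK a b"] cosh_real_ge_1[of "dK a c"] by auto
  ultimately have "cosh (dK a b) \<le> cosh (dK a c)" by (simp add: power_mono_iff)
  thus ?thesis using cosh_real_nonneg_le_iff[OF dK_nonneg dK_nonneg] by simp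
qed

lemma deltaK_norm:
  fixes p q r :: real
  assumes p: "\<bar>p\<bar> < 1" and q: "\<bar>q\<bar> < 1" and pq: "p \<noteq> q" and r: "0 < r" "r < 1"
  shows "deltaK (of_real p) (of_real q) (Complex 0 r) = dK (Complex 0 r) 0"
proof -
  have pq': "(of_real p :: complex) \<noteq> of_real q" using pq by simp
  have Rb: "cmod (Complex 0 r) < 1" using r by (simp add: cmod_def)
  have line: "S \<in> line_thru (of_real p) (of_real q) \<longleftrightarrow> Im S = 0" for S
    unfolding line_crs[OF pq'] crs_def using pq by simp
  have mem: "dK (Complex 0 r) 0 \<in> {dK (Complex 0 r) S | S. S \<in> line_thru (of_real p) (of_real q) \<inter> Dsk}"
    using line[of 0] unfolding Dsk_def by auto
  have lb: "dK (Complex 0 r) 0 \<le> y" if yin: "y \<in> {dK (Complex 0 r) S | S. S \<in> line_thru (of_real p) (of_real q) \<inter> Dsk}" for y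
  proof -
    obtain S where S: "Im S = 0" "cmod S < 1" and y: "y = dK (Complex 0 r) S"
      using yin line unfolding Dsk_def by auto
    have "\<bar>Re S\<bar> < 1" using S abs_Re_le_cmod[of S] by linarith
    hence S2: "(Re S)^2 < 1" by (simp add: abs_square_less_1)
    have r2: "r^2 < 1" using r by (simp add: power_less_one_iff)
    have "Cq (Complex 0 r) 0 = 1 / (1 - r^2)" unfolding Cq_def by (simp add: cmod_def)
    also have "\<dots> \<le> 1 / ((1 - r^2) * (1 - (Re S)^2))"
    proof -
      have "0 < (1 - r^2) * (1 - (Re S)^2)" using S2 r2 by simp
      moreover have "(1 - r^2) * (1 - (Re S)^2) \<le> (1 - r^2)" using r2 by (simp add: mult_le_cancel_left1)
      ultimately show ?thesis by (simp add: frac_le)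
    qed
    also have "\<dots> = Cq (Complex 0 r) S" unfolding Cq_def using S(1) by (simp add: cmod_def)
    finally have "Cq (Complex 0 r) 0 \<le> Cq (Complex 0 r) S" .
    thus ?thesis unfolding y by (intro dK_mono[OF Rb _ S(2), of 0]) auto
  qed
  show ?thesis unfolding deltaK_def by (rule cInf_eq_minimum[OF mem lb])
qed

lemma E_ident:
  fixes y :: real assumes y: "y > 1"
  shows "(((y + 1) / (y - 1)) + 1)^2 / (4 * ((y + 1) / (y - 1))) = y^2 / (y^2 - 1)"
proof -
  have n1: "y - 1 \<noteq> 0" and n2: "y + 1 \<noteq> 0" and n3: "y \<noteq> 0" using y by auto
  have a: "(y + 1) / (y - 1) + 1 = 2 * y / (y - 1)" using n1 by (simp add: divide_simps)
  have b: "(2 * y / (y - 1))^2 / (4 * ((y + 1) / (y - 1))) = y^2 / ((y - 1) * (y + 1))"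
    using n1 n2 n3 by (simp add: divide_simps) (simp add: algebra_simps power2_eq_square)
  have c: "(y - 1) * (y + 1) = y^2 - 1" by (simp add: algebra_simps power2_eq_square)
  show ?thesis unfolding a b c ..
qed

lemma cq_ab:
  fixes A B :: real assumes A: "A > 0" and B: "B > 0"
  shows "(1 - ((A - 1) / (A + 1)) * ((B - 1) / (B + 1)))^2 / ((1 - ((A - 1) / (A + 1))^2) * (1 - ((B - 1) / (B + 1))^2))
    = (A + B)^2 / (4 * A * B)"
proof -
  have nA: "A + 1 \<noteq> 0" and nB: "B + 1 \<noteq> 0" and nA0: "A \<noteq> 0" and nB0: "B \<noteq> 0" using A B by auto
  have e1: "1 - ((A - 1) / (A + 1)) * ((B - 1) / (B + 1)) = 2 * (A + B) / ((A + 1) * (B + 1))"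
    using nA nB by (simp add: divide_simps) (simp add: algebra_simps)
  have e2: "1 - ((A - 1) / (A + 1))^2 = 4 * A / (A + 1)^2"
    using nA by (simp add: divide_simps) (simp add: algebra_simps power2_eq_square)
  have e3: "1 - ((B - 1) / (B + 1))^2 = 4 * B / (B + 1)^2"
    using nB by (simp add: divide_simps) (simp add: algebra_simps power2_eq_square)
  show ?thesis unfolding e1 e2 e3 using nA nB nA0 nB0 by (simp add: divide_simps) (simp add: algebra_simps power2_eq_square)
qed

lemma normal_form:
  fixes p q r :: real
  assumes p: "\<bar>p\<bar> < 1" and q: "\<bar>q\<bar> < 1" and pq: "p < q" and r: "0 < r" "r < 1"
    and hyp: "deltaK (of_real p) (of_real q) (Complex 0 r) = DeltaK 1 (of_real p) (of_real q) / 2"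
  shows "\<exists>\<alpha> \<beta>. 0 < \<alpha> \<and> \<alpha> < \<beta> \<and> p = (\<alpha>^2 - 1) / (\<alpha>^2 + 1) \<and> q = (\<beta>^2 - 1) / (\<beta>^2 + 1) \<and> r = \<alpha> / \<beta>"
proof -
  have pb: "cmod (of_real p :: complex) < 1" and qb: "cmod (of_real q :: complex) < 1" using p q by auto
  have Rb: "cmod (Complex 0 r) < 1" using r by (simp add: cmod_def)
  have zb: "cmod (0::complex) < 1" by simp
  define d where "d = dK (of_real p) (of_real q)"
  define \<delta> where "\<delta> = dK (Complex 0 r) 0"
  have p2: "1 - p^2 > 0" and q2: "1 - q^2 > 0" and r2: "1 - r^2 > 0"
    using p q r by (simp_all add: abs_square_less_1 power_less_one_iff)
  have cd: "(cosh d)^2 = (1 - p * q)^2 / ((1 - p^2) * (1 - q^2))"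
    unfolding d_def dK_cosh[OF pb qb] Cq_def by simp
  have cdel: "(cosh \<delta>)^2 = 1 / (1 - r^2)"
    unfolding \<delta>_def dK_cosh[OF Rb zb] Cq_def by (simp add: cmod_def)
  have gt1: "(1 - p * q)^2 / ((1 - p^2) * (1 - q^2)) > 1"
  proof -
    have "(1 - p * q)^2 - (1 - p^2) * (1 - q^2) = (p - q)^2" by (simp add: algebra_simps power2_eq_square)
    moreover have "(p - q)^2 > 0" using pq by simp
    ultimately have "(1 - p * q)^2 > (1 - p^2) * (1 - q^2)" by linarith
    moreover have "(1 - p^2) * (1 - q^2) > 0" using p2 q2 by simp
    ultimately show ?thesis by simp
  qed
  have d0: "d \<ge> 0" unfolding d_def by (rule dK_nonneg)
  have "d \<noteq> 0"
  proof
    assume "d = 0"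
    hence "(cosh d)^2 = 1" by simp
    thus False using cd gt1 by linarith
  qed
  hence dpos: "d > 0" using d0 by simp
  define y where "y = exp d"
  have y1: "y > 1" unfolding y_def using dpos by simp
  define E where "E = (y + 1) / (y - 1)"
  have E1: "E > 1" unfolding E_def using y1 by simp
  have "DeltaK 1 (of_real p) (of_real q) = ln E" unfolding DeltaK_def d_def[symmetric] E_def y_def by simp
  hence dl: "\<delta> = ln E / 2" using hyp unfolding deltaK_norm[OF p q pq[THEN less_imp_neq] r] \<delta>_def[symmetric]
    by simp
  have ae: "\<bar>ln E\<bar> = ln E" using E1 by simp
  have c1: "(cosh (\<bar>ln E\<bar> / 2))^2 = (E + 1)^2 / (4 * E)" by (rule cosh_half_ln) (use E1 in simp)
  have c2: "\<bar>ln E\<bar> / 2 = \<delta>" unfolding ae dl ..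
  have "(cosh \<delta>)^2 = (E + 1)^2 / (4 * E)" using c1 unfolding c2 .
  also have "\<dots> = y^2 / (y^2 - 1)" unfolding E_def by (rule E_ident[OF y1])
  finally have "1 / (1 - r^2) = y^2 / (y^2 - 1)" using cdel by simp
  hence "r^2 = (1 / y)^2" using y1 r2 by (simp add: field_simps power2_eq_square)
  hence ry: "r = 1 / y" using r y1 by (simp add: power2_eq_iff_nonneg)
  have "cosh d = (y + inverse y) / 2" unfolding y_def cosh_def by (simp add: exp_minus)
  hence "cosh d = (1 + r^2) / (2 * r)" unfolding ry using y1 by (simp add: field_simps power2_eq_square)
  hence key: "((1 + r^2) / (2 * r))^2 = (1 - p * q)^2 / ((1 - p^2) * (1 - q^2))" using cd by simp
  define \<alpha> where "\<alpha> = sqrt ((1 + p) / (1 - p))"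
  define \<beta> where "\<beta> = sqrt ((1 + q) / (1 - q))"
  have pp: "1 - p > 0" "1 + p > 0" and qq: "1 - q > 0" "1 + q > 0" using p q by auto
  have a2: "\<alpha>^2 = (1 + p) / (1 - p)" unfolding \<alpha>_def using pp by simp
  have b2: "\<beta>^2 = (1 + q) / (1 - q)" unfolding \<beta>_def using qq by simp
  have a0: "\<alpha> > 0" unfolding \<alpha>_def using pp by simp
  have b0: "\<beta> > 0" unfolding \<beta>_def using qq by simp
  have pa: "p = (\<alpha>^2 - 1) / (\<alpha>^2 + 1)" unfolding a2 using pp by (simp add: field_simps)
  have qb: "q = (\<beta>^2 - 1) / (\<beta>^2 + 1)" unfolding b2 using qq by (simp add: field_simps)
  have ab: "\<alpha> < \<beta>"
  proof -
    have "(1 + p) / (1 - p) < (1 + q) / (1 - q)" using pp qq pq by (simp add: field_simps)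
    thus ?thesis unfolding \<alpha>_def \<beta>_def by simp
  qed
  have k1: "(1 - p * q)^2 / ((1 - p^2) * (1 - q^2)) = (\<alpha>^2 + \<beta>^2)^2 / (4 * \<alpha>^2 * \<beta>^2)"
    unfolding pa qb by (rule cq_ab) (use a0 b0 in simp_all)
  have k2: "(\<alpha>^2 + \<beta>^2)^2 / (4 * \<alpha>^2 * \<beta>^2) = ((\<alpha>^2 + \<beta>^2) / (2 * \<alpha> * \<beta>))^2"
    by (simp add: power_divide power_mult_distrib)
  have "((1 + r^2) / (2 * r))^2 = ((\<alpha>^2 + \<beta>^2) / (2 * \<alpha> * \<beta>))^2" using key k1 k2 by simp
  moreover have "(1 + r^2) / (2 * r) \<ge> 0" using r by simp
  moreover have "(\<alpha>^2 + \<beta>^2) / (2 * \<alpha> * \<beta>) \<ge> 0" using a0 b0 by simp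
  ultimately have "(1 + r^2) / (2 * r) = (\<alpha>^2 + \<beta>^2) / (2 * \<alpha> * \<beta>)" by (simp add: power2_eq_iff_nonneg)
  hence "\<alpha> * \<beta> * (1 + r^2) = r * (\<alpha>^2 + \<beta>^2)" using r a0 b0 by (simp add: field_simps)
  hence "(r * \<beta> - \<alpha>) * (r * \<alpha> - \<beta>) = 0" by (simp add: algebra_simps power2_eq_square)
  moreover have "r * \<alpha> - \<beta> \<noteq> 0"
  proof -
    have "r * \<alpha> < 1 * \<alpha>" using r a0 by simp
    thus ?thesis using ab by simp
  qed
  ultimately have "r * \<beta> = \<alpha>" by simp
  hence "r = \<alpha> / \<beta>" using b0 by (simp add: field_simps)
  thus ?thesis using a0 ab pa qb by blast
qed

definition "U0 = Complex (-1) 0"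
definition "U1 = Complex 1 0"
definition "U2 a b = Complex (- (b^2 - a^2) / (a^2 + b^2)) (2 * a * b / (a^2 + b^2))"
definition "U3 a b = Complex ((a^2 * b^2 - 1) / (a^2 * b^2 + 1)) (- (2 * a * b) / (a^2 * b^2 + 1))"
definition "U4 a b = Complex ((b^2 - a^2) / (a^2 + b^2)) (2 * a * b / (a^2 + b^2))"
definition "VP a = Complex ((a^2 - 1) / (a^2 + 1)) 0"
definition "VQ b = Complex ((b^2 - 1) / (b^2 + 1)) 0"
definition "VR a b = Complex 0 (a / b)"

lemmas Udefs = U0_def U1_def U2_def U3_def U4_def VP_def VQ_def VR_def

context
  fixes a b :: real
  assumes a: "a > 0" and b: "b > 0"
begin

lemma nz: "a^2 + b^2 \<noteq> 0" "a^2 * b^2 + 1 \<noteq> 0" "a^2 + 1 \<noteq> 0" "b^2 + 1 \<noteq> 0" "b \<noteq> 0" "a \<noteq> 0"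
proof -
  have "a^2 > 0" "b^2 \<ge> 0" "a^2 * b^2 \<ge> 0" using a by simp_all
  thus "a^2 + b^2 \<noteq> 0" "a^2 * b^2 + 1 \<noteq> 0" "a^2 + 1 \<noteq> 0" "b^2 + 1 \<noteq> 0" by linarith+
  show "b \<noteq> 0" "a \<noteq> 0" using a b by auto
qed

lemma e0P: "crs (U1 - U0) ((VP a) - U0) = 0"
  unfolding Udefs crs_def using nz by (simp add: divide_simps; simp add: algebra_simps power2_eq_square power3_eq_cube)

lemma e0Q: "crs (U1 - U0) ((VQ b) - U0) = 0"
  unfolding Udefs crs_def using nz by (simp add: divide_simps; simp add: algebra_simps power2_eq_square power3_eq_cube)

lemma e0R: "crs (U1 - U0) ((VR a b) - U0) = 2 * a / b"
  unfolding Udefs crs_def using nz by (simp add: divide_simps; simp add: algebra_simps power2_eq_square power3_eq_cube)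

lemma e0A: "crs (U1 - U0) ((U3 a b) - U0) = - 4 * a * b / (a^2 * b^2 + 1)"
  unfolding Udefs crs_def using nz by (simp add: divide_simps; simp add: algebra_simps power2_eq_square power3_eq_cube)

lemma e0B: "crs (U1 - U0) ((U2 a b) - U0) = 4 * a * b / (a^2 + b^2)"
  unfolding Udefs crs_def using nz by (simp add: divide_simps; simp add: algebra_simps power2_eq_square power3_eq_cube)

lemma e1P: "crs ((U2 a b) - U1) ((VP a) - U1) = 4 * a * b / ((a^2 + b^2) * (a^2 + 1))"
  unfolding Udefs crs_def using nz by (simp add: divide_simps; simp add: algebra_simps power2_eq_square power3_eq_cube)

lemma e1Q: "crs ((U2 a b) - U1) ((VQ b) - U1) = 4 * a * b / ((a^2 + b^2) * (b^2 + 1))"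
  unfolding Udefs crs_def using nz by (simp add: divide_simps; simp add: algebra_simps power2_eq_square power3_eq_cube)

lemma e1R: "crs ((U2 a b) - U1) ((VR a b) - U1) = 0"
  unfolding Udefs crs_def using nz by (simp add: divide_simps; simp add: algebra_simps power2_eq_square power3_eq_cube)

lemma e1A: "crs ((U2 a b) - U1) ((U4 a b) - U1) = - 4 * a * b * (b^2 - a^2) / (a^2 + b^2)^2"
  unfolding Udefs crs_def using nz by (simp add: divide_simps; simp add: algebra_simps power2_eq_square power3_eq_cube)

lemma e1B: "crs ((U2 a b) - U1) ((U3 a b) - U1) = 4 * a * b * (b^2 + 1) / ((a^2 + b^2) * (a^2 * b^2 + 1))"
  unfolding Udefs crs_def using nz by (simp add: divide_simps; simp add: algebra_simps power2_eq_square power3_eq_cube)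

lemma e2P: "crs ((U3 a b) - (U2 a b)) ((VP a) - (U2 a b)) = 0"
  unfolding Udefs crs_def using nz by (simp add: divide_simps; simp add: algebra_simps power2_eq_square power3_eq_cube)

lemma e2Q: "crs ((U3 a b) - (U2 a b)) ((VQ b) - (U2 a b)) = 4 * a * b * (b^2 - a^2) / ((a^2 + b^2) * (a^2 * b^2 + 1))"
  unfolding Udefs crs_def using nz by (simp add: divide_simps; simp add: algebra_simps power2_eq_square power3_eq_cube)

lemma e2R: "crs ((U3 a b) - (U2 a b)) ((VR a b) - (U2 a b)) = 2 * a * (b^2 - a^2) * (b^2 + 1) / (b * (a^2 + b^2) * (a^2 * b^2 + 1))"
  unfolding Udefs crs_def using nz by (simp add: divide_simps; simp add: algebra_simps power2_eq_square power3_eq_cube)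

lemma e2A: "crs ((U3 a b) - (U2 a b)) (U0 - (U2 a b)) = - 4 * a^3 * b * (b^2 + 1) / ((a^2 + b^2) * (a^2 * b^2 + 1))"
  unfolding Udefs crs_def using nz by (simp add: divide_simps; simp add: algebra_simps power2_eq_square power3_eq_cube)

lemma e2B: "crs ((U3 a b) - (U2 a b)) ((U4 a b) - (U2 a b)) = 4 * a * b * (b^2 - a^2) * (a^2 + 1) * (b^2 + 1) / ((a^2 + b^2)^2 * (a^2 * b^2 + 1))"
  unfolding Udefs crs_def using nz by (simp add: divide_simps; simp add: algebra_simps power2_eq_square power3_eq_cube)

lemma e3P: "crs ((U4 a b) - (U3 a b)) ((VP a) - (U3 a b)) = 4 * a * b * (b^2 - a^2) / ((a^2 + b^2) * (a^2 * b^2 + 1))"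
  unfolding Udefs crs_def using nz by (simp add: divide_simps; simp add: algebra_simps power2_eq_square power3_eq_cube)

lemma e3Q: "crs ((U4 a b) - (U3 a b)) ((VQ b) - (U3 a b)) = 0"
  unfolding Udefs crs_def using nz by (simp add: divide_simps; simp add: algebra_simps power2_eq_square power3_eq_cube)

lemma e3R: "crs ((U4 a b) - (U3 a b)) ((VR a b) - (U3 a b)) = 2 * a * b * (b^2 - a^2) * (a^2 + 1) / ((a^2 + b^2) * (a^2 * b^2 + 1))"
  unfolding Udefs crs_def using nz by (simp add: divide_simps; simp add: algebra_simps power2_eq_square power3_eq_cube)

lemma e3A: "crs ((U4 a b) - (U3 a b)) (U1 - (U3 a b)) = - 4 * a * b * (a^2 + 1) / ((a^2 + b^2) * (a^2 * b^2 + 1))"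
  unfolding Udefs crs_def using nz by (simp add: divide_simps; simp add: algebra_simps power2_eq_square power3_eq_cube)

lemma e3B: "crs ((U4 a b) - (U3 a b)) (U0 - (U3 a b)) = 4 * a * b^3 * (a^2 + 1) / ((a^2 + b^2) * (a^2 * b^2 + 1))"
  unfolding Udefs crs_def using nz by (simp add: divide_simps; simp add: algebra_simps power2_eq_square power3_eq_cube)

lemma e4P: "crs (U0 - (U4 a b)) ((VP a) - (U4 a b)) = 4 * a^3 * b / ((a^2 + b^2) * (a^2 + 1))"
  unfolding Udefs crs_def using nz by (simp add: divide_simps; simp add: algebra_simps power2_eq_square power3_eq_cube)

lemma e4Q: "crs (U0 - (U4 a b)) ((VQ b) - (U4 a b)) = 4 * a * b^3 / ((a^2 + b^2) * (b^2 + 1))"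
  unfolding Udefs crs_def using nz by (simp add: divide_simps; simp add: algebra_simps power2_eq_square power3_eq_cube)

lemma e4R: "crs (U0 - (U4 a b)) ((VR a b) - (U4 a b)) = 0"
  unfolding Udefs crs_def using nz by (simp add: divide_simps; simp add: algebra_simps power2_eq_square power3_eq_cube)

lemma e4A: "crs (U0 - (U4 a b)) ((U2 a b) - (U4 a b)) = - 4 * a * b * (b^2 - a^2) / (a^2 + b^2)^2"
  unfolding Udefs crs_def using nz by (simp add: divide_simps; simp add: algebra_simps power2_eq_square power3_eq_cube)

lemma e4B: "crs (U0 - (U4 a b)) (U1 - (U4 a b)) = 4 * a * b / (a^2 + b^2)"
  unfolding Udefs crs_def using nz by (simp add: divide_simps; simp add: algebra_simps power2_eq_square power3_eq_cube)

lemma n0: "cmod (U0) = 1"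
  unfolding Udefs cmod_def using nz by (simp add: divide_simps; simp add: algebra_simps power2_eq_square)

lemma n1: "cmod (U1) = 1"
  unfolding Udefs cmod_def using nz by (simp add: divide_simps; simp add: algebra_simps power2_eq_square)

lemma n2: "cmod (U2 a b) = 1"
  unfolding Udefs cmod_def using nz by (simp add: divide_simps; simp add: algebra_simps power2_eq_square)

lemma n3: "cmod (U3 a b) = 1"
  unfolding Udefs cmod_def using nz by (simp add: divide_simps; simp add: algebra_simps power2_eq_square)

lemma n4: "cmod (U4 a b) = 1"
  unfolding Udefs cmod_def using nz by (simp add: divide_simps; simp add: algebra_simps power2_eq_square)

end

lemma transport:
  assumes iso: "iso \<phi> \<psi>" and a: "cmod a \<le> 1" and b: "cmod b \<le> 1" and c: "cmod c \<le> 1"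
    and ea: "\<phi> a = a'" and eb: "\<phi> b = b'" and ec: "\<phi> c = c'"
  shows "crs (b' - a') (c' - a') > 0 \<Longrightarrow> crs (b - a) (c - a) > 0"
    and "crs (b' - a') (c' - a') < 0 \<Longrightarrow> crs (b - a) (c - a) < 0"
    and "crs (b' - a') (c' - a') = 0 \<Longrightarrow> crs (b - a) (c - a) = 0"
proof -
  have s: "sgn (crs (b' - a') (c' - a')) = sgn (crs (b - a) (c - a))"
    using iso a b c unfolding iso_def ea[symmetric] eb[symmetric] ec[symmetric] by blast
  show "crs (b' - a') (c' - a') > 0 \<Longrightarrow> crs (b - a) (c - a) > 0" using s by (metis sgn_greater)
  show "crs (b' - a') (c' - a') < 0 \<Longrightarrow> crs (b - a) (c - a) < 0" using s by (metis sgn_less)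
  show "crs (b' - a') (c' - a') = 0 \<Longrightarrow> crs (b - a) (c - a) = 0" using s by (metis sgn_0_0)
qed

lemma psi_props:
  assumes V: "{P,Q,R} \<subseteq> ball (0::complex) 1"
  shows "continuous_on (sphere 0 1) (psi (convex hull {P,Q,R}))"
    and "\<And>v. cmod v = 1 \<Longrightarrow> cmod (psi (convex hull {P,Q,R}) v) = 1"
    and "\<And>v. cmod v = 1 \<Longrightarrow> psi (convex hull {P,Q,R}) v \<noteq> v"
    and "inj_on (psi (convex hull {P,Q,R})) (sphere 0 1)"
proof -
  show "continuous_on (sphere 0 1) (psi (convex hull {P,Q,R}))" by (rule psi_cont[OF V])
  show "inj_on (psi (convex hull {P,Q,R})) (sphere 0 1)" by (rule psi_inj[OF V])
  fix v :: complex assume v: "cmod v = 1"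
  obtain c where c: "c \<in> {P,Q,R}" "\<forall>x\<in>{P,Q,R}. crs (c - v) (x - v) \<ge> 0"
    using exists_vertex[OF V v] by blast
  have cb: "cmod c < 1" using subsetD[OF V c(1)] by simp
  have cv: "c \<noteq> v" using cb v by auto
  have e: "psi (convex hull {P,Q,R}) v = sec v c" by (rule psi_sec[OF V v c])
  show "cmod (psi (convex hull {P,Q,R}) v) = 1" unfolding e by (rule sec_sphere[OF v cv])
  show "psi (convex hull {P,Q,R}) v \<noteq> v" unfolding e by (rule sec_neq[OF v cb])
qed

lemma main_ordered:
  fixes P Q R :: complex
  assumes P: "P \<in> Dsk" and Q: "Q \<in> Dsk" and R: "R \<in> Dsk"
    and hyp: "deltaK P Q R = DeltaK 1 P Q / 2"
    and iso: "iso \<phi> \<psi>" and iP: "Im (\<phi> P) = 0" and iQ: "Im (\<phi> Q) = 0"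
    and rR: "Re (\<phi> R) = 0" and iR: "Im (\<phi> R) > 0" and pq: "Re (\<phi> P) < Re (\<phi> Q)"
  shows "has_rotation_number (psi (convex hull {P, Q, R})) (2 / 5)"
proof -
  have Pb: "cmod P < 1" and Qb: "cmod Q < 1" and Rb: "cmod R < 1" using P Q R unfolding Dsk_def by auto
  have P1: "cmod P \<le> 1" and Q1: "cmod Q \<le> 1" and R1: "cmod R \<le> 1" using Pb Qb Rb by auto
  have V: "{P,Q,R} \<subseteq> ball (0::complex) 1" using Pb Qb Rb by auto
  define p where "p = Re (\<phi> P)"
  define q where "q = Re (\<phi> Q)"
  define r where "r = Im (\<phi> R)"
  have eP: "\<phi> P = of_real p" unfolding p_def using iP by (simp add: complex_eq_iff)
  have eQ: "\<phi> Q = of_real q" unfolding q_def using iQ by (simp add: complex_eq_iff)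
  have eR: "\<phi> R = Complex 0 r" unfolding r_def using rR by (simp add: complex_eq_iff)
  have "cmod (\<phi> P) < 1" "cmod (\<phi> Q) < 1" "cmod (\<phi> R) < 1" using iso Pb Qb Rb unfolding iso_def by auto
  hence p1: "\<bar>p\<bar> < 1" and q1: "\<bar>q\<bar> < 1" and r1: "r < 1" unfolding eP eQ eR by (auto simp: cmod_def)
  have r0: "r > 0" unfolding r_def by (rule iR)
  have pq': "p < q" unfolding p_def q_def by (rule pq)
  have PQ: "P \<noteq> Q" using pq' eP eQ by auto
  have hd: "deltaK (\<phi> P) (\<phi> Q) (\<phi> R) = deltaK P Q R" by (rule iso_deltaK[OF iso Pb Qb Rb PQ])
  have hD: "DeltaK 1 (\<phi> P) (\<phi> Q) = DeltaK 1 P Q" unfolding DeltaK_def iso_dK[OF iso Pb Qb] ..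
  have hyp': "deltaK (of_real p) (of_real q) (Complex 0 r) = DeltaK 1 (of_real p) (of_real q) / 2"
    using hyp hd hD unfolding eP eQ eR by simp
  obtain \<alpha> \<beta> where a0: "0 < \<alpha>" and ab: "\<alpha> < \<beta>" and pa: "p = (\<alpha>^2 - 1) / (\<alpha>^2 + 1)"
    and qb: "q = (\<beta>^2 - 1) / (\<beta>^2 + 1)" and ra: "r = \<alpha> / \<beta>"
    using normal_form[OF p1 q1 pq' r0 r1 hyp'] by blast
  have b0: "0 < \<beta>" using a0 ab by simp
  have eP': "\<phi> P = VP \<alpha>" unfolding eP VP_def pa by (simp add: complex_eq_iff)
  have eQ': "\<phi> Q = VQ \<beta>" unfolding eQ VQ_def qb by (simp add: complex_eq_iff)
  have eR': "\<phi> R = VR \<alpha> \<beta>" unfolding eR VR_def ra ..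
  have pos: "0 < \<alpha>" "0 < \<beta>" "\<alpha>^2 < \<beta>^2" "0 < \<alpha>^2 + \<beta>^2" "0 < \<alpha>^2 * \<beta>^2 + 1"
    "0 < \<alpha>^2 + 1" "0 < \<beta>^2 + 1" "\<alpha> \<noteq> 0" "\<beta> \<noteq> 0"
  proof -
    show "0 < \<alpha>" "0 < \<beta>" using a0 b0 by auto
    show "\<alpha>^2 < \<beta>^2" using a0 ab by (simp add: power_strict_mono)
    have "\<alpha>^2 > 0" "\<beta>^2 \<ge> 0" "\<alpha>^2 * \<beta>^2 \<ge> 0" using a0 by simp_all
    thus s1: "0 < \<alpha>^2 + \<beta>^2" "0 < \<alpha>^2 * \<beta>^2 + 1" "0 < \<alpha>^2 + 1" "0 < \<beta>^2 + 1" by linarith+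
    show "\<alpha> \<noteq> 0" "\<beta> \<noteq> 0" using a0 b0 by auto
  qed
  have n: "cmod U0 = 1" "cmod U1 = 1" "cmod (U2 \<alpha> \<beta>) = 1" "cmod (U3 \<alpha> \<beta>) = 1" "cmod (U4 \<alpha> \<beta>) = 1"
    using n0[OF a0 b0] n1[OF a0 b0] n2[OF a0 b0] n3[OF a0 b0] n4[OF a0 b0] by auto
  define o0 where "o0 = \<psi> U0"
  define o1 where "o1 = \<psi> U1"
  define o2 where "o2 = \<psi> (U2 \<alpha> \<beta>)"
  define o3 where "o3 = \<psi> (U3 \<alpha> \<beta>)"
  define o4 where "o4 = \<psi> (U4 \<alpha> \<beta>)"
  have u0: "cmod o0 = 1" and u1: "cmod o1 = 1" and u2: "cmod o2 = 1" and u3: "cmod o3 = 1" and u4: "cmod o4 = 1"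
    unfolding o0_def o1_def o2_def o3_def o4_def using iso n unfolding iso_def by auto
  have c0: "cmod o0 \<le> 1" and c1: "cmod o1 \<le> 1" and c2: "cmod o2 \<le> 1" and c3: "cmod o3 \<le> 1" and c4: "cmod o4 \<le> 1"
    using u0 u1 u2 u3 u4 by auto
  have f0: "\<phi> o0 = U0" and f1: "\<phi> o1 = U1" and f2: "\<phi> o2 = U2 \<alpha> \<beta>" and f3: "\<phi> o3 = U3 \<alpha> \<beta>"
    and f4: "\<phi> o4 = U4 \<alpha> \<beta>"
    unfolding o0_def o1_def o2_def o3_def o4_def using iso n unfolding iso_def by auto
  have t0P: "crs (o1 - o0) (P - o0) = 0"
    by (rule transport(3)[OF iso c0 c1 P1 f0 f1 eP']) (simp add: e0P[OF a0 b0])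
  have t0Q: "crs (o1 - o0) (Q - o0) = 0"
    by (rule transport(3)[OF iso c0 c1 Q1 f0 f1 eQ']) (simp add: e0Q[OF a0 b0])
  have t0R: "crs (o1 - o0) (R - o0) > 0"
    by (rule transport(1)[OF iso c0 c1 R1 f0 f1 eR']) (simp add: e0R[OF a0 b0] pos)
  have t0A: "crs (o1 - o0) (o3 - o0) < 0"
    by (rule transport(2)[OF iso c0 c1 c3 f0 f1 f3]) (simp add: e0A[OF a0 b0] pos)
  have t0B: "crs (o1 - o0) (o2 - o0) > 0"
    by (rule transport(1)[OF iso c0 c1 c2 f0 f1 f2]) (simp add: e0B[OF a0 b0] pos)
  have t1P: "crs (o2 - o1) (P - o1) > 0"
    by (rule transport(1)[OF iso c1 c2 P1 f1 f2 eP']) (simp add: e1P[OF a0 b0] pos)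
  have t1Q: "crs (o2 - o1) (Q - o1) > 0"
    by (rule transport(1)[OF iso c1 c2 Q1 f1 f2 eQ']) (simp add: e1Q[OF a0 b0] pos)
  have t1R: "crs (o2 - o1) (R - o1) = 0"
    by (rule transport(3)[OF iso c1 c2 R1 f1 f2 eR']) (simp add: e1R[OF a0 b0])
  have t1A: "crs (o2 - o1) (o4 - o1) < 0"
    by (rule transport(2)[OF iso c1 c2 c4 f1 f2 f4]) (simp add: e1A[OF a0 b0] pos)
  have t1B: "crs (o2 - o1) (o3 - o1) > 0"
    by (rule transport(1)[OF iso c1 c2 c3 f1 f2 f3]) (simp add: e1B[OF a0 b0] pos)
  have t2P: "crs (o3 - o2) (P - o2) = 0"
    by (rule transport(3)[OF iso c2 c3 P1 f2 f3 eP']) (simp add: e2P[OF a0 b0])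
  have t2Q: "crs (o3 - o2) (Q - o2) > 0"
    by (rule transport(1)[OF iso c2 c3 Q1 f2 f3 eQ']) (simp add: e2Q[OF a0 b0] pos)
  have t2R: "crs (o3 - o2) (R - o2) > 0"
    by (rule transport(1)[OF iso c2 c3 R1 f2 f3 eR']) (simp add: e2R[OF a0 b0] pos)
  have t2A: "crs (o3 - o2) (o0 - o2) < 0"
    by (rule transport(2)[OF iso c2 c3 c0 f2 f3 f0]) (simp add: e2A[OF a0 b0] pos)
  have t2B: "crs (o3 - o2) (o4 - o2) > 0"
    by (rule transport(1)[OF iso c2 c3 c4 f2 f3 f4]) (simp add: e2B[OF a0 b0] pos)
  have t3P: "crs (o4 - o3) (P - o3) > 0"
    by (rule transport(1)[OF iso c3 c4 P1 f3 f4 eP']) (simp add: e3P[OF a0 b0] pos)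
  have t3Q: "crs (o4 - o3) (Q - o3) = 0"
    by (rule transport(3)[OF iso c3 c4 Q1 f3 f4 eQ']) (simp add: e3Q[OF a0 b0])
  have t3R: "crs (o4 - o3) (R - o3) > 0"
    by (rule transport(1)[OF iso c3 c4 R1 f3 f4 eR']) (simp add: e3R[OF a0 b0] pos)
  have t3A: "crs (o4 - o3) (o1 - o3) < 0"
    by (rule transport(2)[OF iso c3 c4 c1 f3 f4 f1]) (simp add: e3A[OF a0 b0] pos)
  have t3B: "crs (o4 - o3) (o0 - o3) > 0"
    by (rule transport(1)[OF iso c3 c4 c0 f3 f4 f0]) (simp add: e3B[OF a0 b0] pos)
  have t4P: "crs (o0 - o4) (P - o4) > 0"
    by (rule transport(1)[OF iso c4 c0 P1 f4 f0 eP']) (simp add: e4P[OF a0 b0] pos)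
  have t4Q: "crs (o0 - o4) (Q - o4) > 0"
    by (rule transport(1)[OF iso c4 c0 Q1 f4 f0 eQ']) (simp add: e4Q[OF a0 b0] pos)
  have t4R: "crs (o0 - o4) (R - o4) = 0"
    by (rule transport(3)[OF iso c4 c0 R1 f4 f0 eR']) (simp add: e4R[OF a0 b0])
  have t4A: "crs (o0 - o4) (o2 - o4) < 0"
    by (rule transport(2)[OF iso c4 c0 c2 f4 f0 f2]) (simp add: e4A[OF a0 b0] pos)
  have t4B: "crs (o0 - o4) (o1 - o4) > 0"
    by (rule transport(1)[OF iso c4 c0 c1 f4 f0 f1]) (simp add: e4B[OF a0 b0] pos)
  have d0: "o1 \<noteq> o0" using crs_distinct[of o1 o0 o3] t0A by auto
  have s0: "psi (convex hull {P,Q,R}) o0 = o1"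
    by (rule psi_eq[OF V u0 u1 d0, where c = P]) (use t0P t0Q t0R in auto)
  have d1: "o2 \<noteq> o1" using crs_distinct[of o2 o1 o4] t1A by auto
  have s1: "psi (convex hull {P,Q,R}) o1 = o2"
    by (rule psi_eq[OF V u1 u2 d1, where c = R]) (use t1P t1Q t1R in auto)
  have d2: "o3 \<noteq> o2" using crs_distinct[of o3 o2 o0] t2A by auto
  have s2: "psi (convex hull {P,Q,R}) o2 = o3"
    by (rule psi_eq[OF V u2 u3 d2, where c = P]) (use t2P t2Q t2R in auto)
  have d3: "o4 \<noteq> o3" using crs_distinct[of o4 o3 o1] t3A by auto
  have s3: "psi (convex hull {P,Q,R}) o3 = o4"
    by (rule psi_eq[OF V u3 u4 d3, where c = Q]) (use t3P t3Q t3R in auto)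
  have d4: "o0 \<noteq> o4" using crs_distinct[of o0 o4 o2] t4A by auto
  have s4: "psi (convex hull {P,Q,R}) o4 = o0"
    by (rule psi_eq[OF V u4 u0 d4, where c = R]) (use t4P t4Q t4R in auto)
  note PP = psi_props[OF V]
  show ?thesis
    by (rule rot_from_orbit[OF PP(1) PP(2) PP(3) PP(4) u0 u1 u2 u3 u4 s0 s1 s2 s3 s4
        t0A t1A t2A t3A t4A t0B t1B t2B t3B t4B])
qed

lemma Cq_sym: "Cq a b = Cq b a"
  unfolding Cq_def by (simp add: algebra_simps)

lemma dK_sym:
  assumes "cmod a < 1" "cmod b < 1"
  shows "dK a b = dK b a"
  by (rule dK_from_cosh[OF dK_nonneg dK_nonneg]) (simp add: dK_cosh[OF assms] dK_cosh[OF assms(2,1)] Cq_sym)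

lemma line_thru_sym:
  assumes "P \<noteq> Q"
  shows "line_thru P Q = line_thru Q P"
proof -
  have "crs (Q - P) (S - P) = 0 \<longleftrightarrow> crs (P - Q) (S - Q) = 0" for S
    unfolding crs_def by (simp add: algebra_simps) (simp add: eq_commute)
  thus ?thesis using line_crs[OF assms] line_crs[OF not_sym[OF assms]] by blast
qed

lemma deltaK_sym:
  assumes "P \<noteq> Q"
  shows "deltaK P Q R = deltaK Q P R"
  unfolding deltaK_def line_thru_sym[OF assms] ..

theorem lemma4p3:
  fixes P Q R :: complex
  assumes "P \<in> Dsk" and "Q \<in> Dsk" and "R \<in> Dsk"
    and "\<not> collinear {P, Q, R}"
    and "deltaK P Q R = DeltaK 1 P Q / 2"
  shows "has_rotation_number (psi (convex hull {P, Q, R})) (2/5)"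
proof -
  have Pb: "cmod P < 1" and Qb: "cmod Q < 1" and Rb: "cmod R < 1" using assms(1-3) unfolding Dsk_def by auto
  obtain \<phi> \<psi> where iso: "iso \<phi> \<psi>" and iP: "Im (\<phi> P) = 0" and iQ: "Im (\<phi> Q) = 0"
    and rR: "Re (\<phi> R) = 0" and iR: "Im (\<phi> R) > 0"
    using normalize[OF Pb Qb Rb assms(4)] by blast
  have PQ: "P \<noteq> Q" using not_collinear_crs[OF assms(4)] by simp
  have "\<phi> P \<noteq> \<phi> Q"
  proof
    assume "\<phi> P = \<phi> Q"
    hence "\<psi> (\<phi> P) = \<psi> (\<phi> Q)" by simp
    moreover have "\<psi> (\<phi> P) = P" "\<psi> (\<phi> Q) = Q" using iso Pb Qb unfolding iso_def by auto
    ultimately show False using PQ by simp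
  qed
  hence ne: "Re (\<phi> P) \<noteq> Re (\<phi> Q)" using iP iQ by (auto simp: complex_eq_iff)
  show ?thesis
  proof (cases "Re (\<phi> P) < Re (\<phi> Q)")
    case True
    show ?thesis by (rule main_ordered[OF assms(1-3) assms(5) iso iP iQ rR iR True])
  next
    case False
    hence lt: "Re (\<phi> Q) < Re (\<phi> P)" using ne by simp
    have hyp: "deltaK Q P R = DeltaK 1 Q P / 2"
      using assms(5) deltaK_sym[OF PQ, of R] dK_sym[OF Pb Qb] unfolding DeltaK_def by simp
    have "has_rotation_number (psi (convex hull {Q, P, R})) (2/5)"
      by (rule main_ordered[OF assms(2) assms(1) assms(3) hyp iso iQ iP rR iR lt])
    moreover have "{Q, P, R} = {P, Q, R}" by auto
    ultimately show ?thesis by simp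
  qed
qed

end
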